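(* Let $N\ge 1$ and let $\lambda,\mu$, $M_j,\bar M_j$, $c_j,\bar c_j$ ($j=1,\dots,N$) be real constants such that $\lambda\neq 0$, $\mu\neq 0$, $\lambda^2\neq\mu^2$, $\bar M_j\neq M_k$ for all $j,k$, and $\lambda,\mu\notin\{\pm M_j,\pm\bar M_j: j=1,\dots,N\}$. Let $\mathsf M=\mathrm{diag}(M_1,\dots,M_N)$, $\bar{\mathsf M}=\mathrm{diag}(\bar M_1,\dots,\bar M_N)$ and, for $\zeta\in\{\lambda,\mu\}$, $$\mathsf H_\zeta=(\mathsf M-\zeta)(\mathsf M+\zeta)^{-1},\quad \bar{\mathsf H}_\zeta=(\bar{\mathsf M}+\zeta)(\bar{\mathsf M}-\zeta)^{-1},\quad \mathsf L_\zeta=\mathsf H_\zeta-\mathsf H_\zeta^{-1},\quad \bar{\mathsf L}_\zeta=\bar{\mathsf H}_\zeta-\bar{\mathsf H}_\zeta^{-1}$$ (here $\mathsf M-\zeta$ means $\mathsf M-\zeta\mathsf 1$, etc.). Let $\mathsf A_0,\bar{\mathsf A}_0$ be the $N\times N$ matrices with entries $(\mathsf A_0)_{jk}=\dfrac{c_k}{\bar M_j-M_k}$ and $(\bar{\mathsf A}_0)_{jk}=\dfrac{\bar c_k}{M_j-\bar M_k}$, and for $(x,y,n_1,n_2)\in\mathbb R^2\times\mathbb Z^2$ set $$\mathsf A(x,y,n_1,n_2)=\mathsf A_0\exp(x\mathsf L_\lambda+y\mathsf L_\mu)\,\mathsf H_\lambda^{n_1+n_2}\mathsf H_\mu^{n_2-n_1},\qquad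 \bar{\mathsf A}(x,y,n_1,n_2)=\bar{\mathsf A}_0\exp(x\bar{\mathsf L}_\lambda+y\bar{\mathsf L}_\mu)\,\bar{\mathsf H}_\lambda^{n_1+n_2}\bar{\mathsf H}_\mu^{n_2-n_1},$$ $$\varphi(x,y,n_1,n_2)=8xy\,\frac{\lambda\mu(\lambda^2+\mu^2)}{(\lambda^2-\mu^2)^2}+(n_1^2-n_2^2)\ln\left|\frac{\lambda+\mu}{\lambda-\mu}\right|.$$ Assume that $\det\big(\mathsf 1+\mathsf A(x,y,n_1,n_2)\bar{\mathsf A}(x,y,n_1,n_2)\big)>0$ for all $(x,y,n_1,n_2)\in\mathbb R^2\times\mathbb Z^2$, and define $$u(x,y,n_1,n_2)=\varphi(x,y,n_1,n_2)+\ln\det\big(\mathsf 1+\mathsf A(x,y,n_1,n_2)\bar{\mathsf A}(x,y,n_1,n_2)\big).$$ Then $u$ satisfies the $(2+2)$-dimensional Toda lattice equation $$\frac{\partial^2 u}{\partial x\,\partial y}=e^{\Delta_1 u}-e^{\Delta_2 u}$$ for all $(x,y,n_1,n_2)\in\mathbb R^2\times\mathbb Z^2$, where $\Delta_1u(n_1,n_2)=u(n_1+1,n_2)-2u(n_1,n_2)+u(n_1-1,n_2)$ and $\Delta_2u(n_1,n_2)=u(n_1,n_2+1)-2u(n_1,n_2)+u(n_1,n_2-1)$ (with $x,y$ fixed).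
   Context: All matrices and constants are real; $\mathsf 1$ is the $N\times N$ identity matrix. The functions $u$ are functions of two continuous variables $x,y$ and two integer variables $n_1,n_2$. *)

theory Defs
  imports "HOL-Analysis.Analysis"
begin

definition diagm :: "('n::finite \<Rightarrow> real) \<Rightarrow> real^'n^'n" where
  "diagm d = (\<chi> i j. if i = j then d i else 0)"

definition Hd :: "real^'n::finite \<Rightarrow> real \<Rightarrow> 'n \<Rightarrow> real" where
  "Hd M z k = (M$k - z) / (M$k + z)"

definition Hbd :: "real^'n::finite \<Rightarrow> real \<Rightarrow> 'n \<Rightarrow> real" where
  "Hbd Mb z k = (Mb$k + z) / (Mb$k - z)"

definition Ld :: "real^'n::finite \<Rightarrow> real \<Rightarrow> 'n \<Rightarrow> real" where
  "Ld M z k = Hd M z k - inverse (Hd M z k)"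

definition Lbd :: "real^'n::finite \<Rightarrow> real \<Rightarrow> 'n \<Rightarrow> real" where
  "Lbd Mb z k = Hbd Mb z k - inverse (Hbd Mb z k)"

definition A0 :: "real^'n::finite \<Rightarrow> real^'n \<Rightarrow> real^'n \<Rightarrow> real^'n^'n" where
  "A0 c M Mb = (\<chi> j k. c$k / (Mb$j - M$k))"

definition Ab0 :: "real^'n::finite \<Rightarrow> real^'n \<Rightarrow> real^'n \<Rightarrow> real^'n^'n" where
  "Ab0 cb M Mb = (\<chi> j k. cb$k / (M$j - Mb$k))"

text \<open>A(x,y,n1,n2); exp of the diagonal matrix x L_lambda + y L_mu and integer powers
  of the diagonal matrices H are written entrywise.\<close>
definition Amat :: "real \<Rightarrow> real \<Rightarrow> real^'n::finite \<Rightarrow> real^'n \<Rightarrow> real^'n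
    \<Rightarrow> real \<Rightarrow> real \<Rightarrow> int \<Rightarrow> int \<Rightarrow> real^'n^'n" where
  "Amat la mu c M Mb x y n1 n2 =
     A0 c M Mb ** diagm (\<lambda>k. exp (x * Ld M la k + y * Ld M mu k))
       ** diagm (\<lambda>k. Hd M la k powi (n1 + n2)) ** diagm (\<lambda>k. Hd M mu k powi (n2 - n1))"

definition Abmat :: "real \<Rightarrow> real \<Rightarrow> real^'n::finite \<Rightarrow> real^'n \<Rightarrow> real^'n
    \<Rightarrow> real \<Rightarrow> real \<Rightarrow> int \<Rightarrow> int \<Rightarrow> real^'n^'n" where
  "Abmat la mu cb M Mb x y n1 n2 =
     Ab0 cb M Mb ** diagm (\<lambda>k. exp (x * Lbd Mb la k + y * Lbd Mb mu k))
       ** diagm (\<lambda>k. Hbd Mb la k powi (n1 + n2)) ** diagm (\<lambda>k. Hbd Mb mu k powi (n2 - n1))"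

definition phi :: "real \<Rightarrow> real \<Rightarrow> real \<Rightarrow> real \<Rightarrow> int \<Rightarrow> int \<Rightarrow> real" where
  "phi la mu x y n1 n2 =
     8 * x * y * (la * mu * (la^2 + mu^2) / (la^2 - mu^2)^2)
     + real_of_int (n1^2 - n2^2) * ln \<bar>(la + mu) / (la - mu)\<bar>"

definition uu :: "real \<Rightarrow> real \<Rightarrow> real^'n::finite \<Rightarrow> real^'n \<Rightarrow> real^'n \<Rightarrow> real^'n
    \<Rightarrow> real \<Rightarrow> real \<Rightarrow> int \<Rightarrow> int \<Rightarrow> real" where
  "uu la mu c cb M Mb x y n1 n2 =
     phi la mu x y n1 n2
     + ln (det (mat 1 + Amat la mu c M Mb x y n1 n2 ** Abmat la mu cb M Mb x y n1 n2))"

end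

theory Submission
  imports Defs
begin


lemma inv_props:
  fixes G :: "real^'n::finite^'n"
  assumes "invertible G"
  shows "G ** matrix_inv G = mat 1" "matrix_inv G ** G = mat 1"
proof -
  have "\<exists>A'. G ** A' = mat 1 \<and> A' ** G = mat 1" using assms unfolding invertible_def by blast
  from someI_ex[OF this] show "G ** matrix_inv G = mat 1" "matrix_inv G ** G = mat 1"
    unfolding matrix_inv_def by auto
qed

lemma inv_entries:
  fixes G :: "real^'n::finite^'n"
  assumes "invertible G"
  shows "(\<Sum>k\<in>UNIV. G$i$k * matrix_inv G$k$j) = (if i = j then 1 else 0)"
    "(\<Sum>k\<in>UNIV. matrix_inv G$i$k * G$k$j) = (if i = j then 1 else 0)"
proof -
  from inv_props[OF assms] have a: "(G ** matrix_inv G)$i$j = (mat 1::real^'n^'n)$i$j"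
    and b: "(matrix_inv G ** G)$i$j = (mat 1::real^'n^'n)$i$j" by auto
  show "(\<Sum>k\<in>UNIV. G$i$k * matrix_inv G$k$j) = (if i = j then 1 else 0)"
    using a by (simp add: matrix_matrix_mult_def mat_def)
  show "(\<Sum>k\<in>UNIV. matrix_inv G$i$k * G$k$j) = (if i = j then 1 else 0)"
    using b by (simp add: matrix_matrix_mult_def mat_def)
qed

lemma inv_unique:
  fixes G X :: "real^'n::finite^'n"
  assumes "G ** X = mat 1"
  shows "invertible G" "matrix_inv G = X"
proof -
  have "X ** G = mat 1" using assms by (simp add: matrix_left_right_inverse)
  then show "invertible G" using assms unfolding invertible_def by blast
  then have "matrix_inv G ** G = mat 1" by (rule inv_props)
  then have "matrix_inv G ** (G ** X) = X" by (simp add: matrix_mul_assoc)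
  then show "matrix_inv G = X" using assms by simp
qed

lemma det_id_row:
  fixes y :: "real^'n::finite"
  shows "det (\<chi> i. if i = k then y else (mat 1::real^'n^'n)$i) = y$k"
proof -
  let ?X = "(\<chi> i. if i = k then y else (mat 1::real^'n^'n)$i)"
  have z: "prod (\<lambda>i. ?X$i$p i) UNIV = 0" if p: "p permutes UNIV" "p \<noteq> id" for p
  proof -
    have "\<exists>i. i \<noteq> k \<and> p i \<noteq> i"
    proof (rule ccontr)
      assume "\<not> ?thesis"
      hence fx: "\<forall>i. i \<noteq> k \<longrightarrow> p i = i" by auto
      have "p k = k"
      proof (rule ccontr)
        assume "p k \<noteq> k"
        then have "p (p k) = p k" using fx by auto
        hence "p k = k" using injD[OF permutes_inj[OF p(1)]] by blast
        thus False using \<open>p k \<noteq> k\<close> by simp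
      qed
      then have "p = id" using fx by (auto simp: fun_eq_iff)
      thus False using p(2) by simp
    qed
    then obtain i where "i \<noteq> k" "p i \<noteq> i" by auto
    hence h: "?X$i$p i = 0" by (simp add: mat_def)
    show ?thesis
      apply (rule prod_zero)
       apply simp
      apply (rule bexI[of _ i])
      using h by auto
  qed
  have fin: "finite {p. p permutes (UNIV::'n set)}" by (simp add: finite_permutations)
  have idin: "id \<in> {p. p permutes (UNIV::'n set)}" by (simp add: permutes_id)
  have "det ?X = (\<Sum>p\<in>{p. p permutes UNIV}. of_int (sign p) * prod (\<lambda>i. ?X$i$p i) UNIV)"
    by (simp add: det_def)
  also have "\<dots> = of_int (sign id) * prod (\<lambda>i. ?X$i$id i) UNIV"
  proof -
    have "(\<Sum>p\<in>{p. p permutes UNIV} - {id}. of_int (sign p) * prod (\<lambda>i. ?X$i$p i) UNIV) = 0"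
    proof (rule sum.neutral, rule ballI)
      fix p assume "p \<in> {p. p permutes (UNIV::'n set)} - {id}"
      then have "p permutes UNIV" "p \<noteq> id" by auto
      then show "of_int (sign p) * prod (\<lambda>i. ?X$i$p i) UNIV = 0" using z by simp
    qed
    then show ?thesis by (simp add: sum.remove[OF fin idin])
  qed
  also have "of_int (sign id) * prod (\<lambda>i. ?X$i$id i) UNIV = prod (\<lambda>i. ?X$i$i) UNIV" by (simp add: sign_id)
  also have "\<dots> = ?X$k$k * prod (\<lambda>i. ?X$i$i) (UNIV - {k})"
    by (subst prod.remove[of UNIV k]) auto
  also have "prod (\<lambda>i. ?X$i$i) (UNIV - {k}) = 1"
    by (intro prod.neutral) (auto simp: mat_def)
  finally show ?thesis by simp
qed

lemma det_row_replace:
  fixes G :: "real^'n::finite^'n"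
  assumes "invertible G"
  shows "det (\<chi> i. if i = k then z else G$i) = (\<Sum>l\<in>UNIV. z$l * matrix_inv G$l$k) * det G"
proof -
  let ?y = "(\<chi> j. \<Sum>l\<in>UNIV. z$l * matrix_inv G$l$j) :: real^'n"
  have eq: "(\<chi> i. if i = k then z else G$i) = (\<chi> i. if i = k then ?y else (mat 1::real^'n^'n)$i) ** G"
  proof -
    have "(\<Sum>m\<in>UNIV. (\<Sum>l\<in>UNIV. z$l * matrix_inv G$l$m) * G$m$j) = z$j" for j
    proof -
      have "(\<Sum>m\<in>UNIV. (\<Sum>l\<in>UNIV. z$l * matrix_inv G$l$m) * G$m$j)
          = (\<Sum>m\<in>UNIV. \<Sum>l\<in>UNIV. z$l * (matrix_inv G$l$m * G$m$j))"
        by (simp add: sum_distrib_right mult.assoc)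
      also have "\<dots> = (\<Sum>l\<in>UNIV. \<Sum>m\<in>UNIV. z$l * (matrix_inv G$l$m * G$m$j))"
        by (rule sum.swap)
      also have "\<dots> = (\<Sum>l\<in>UNIV. z$l * (\<Sum>m\<in>UNIV. matrix_inv G$l$m * G$m$j))"
        by (simp add: sum_distrib_left)
      also have "\<dots> = (\<Sum>l\<in>UNIV. z$l * (if l = j then 1 else 0))"
        by (simp add: inv_entries[OF assms])
      also have "\<dots> = z$j" by (simp add: if_distrib cong: if_cong)
      finally show ?thesis .
    qed
    moreover have "(\<Sum>m\<in>UNIV. (if i = m then 1 else 0) * (G$m$j)) = G$i$j" for i j
    proof -
      have "(\<Sum>m\<in>UNIV. (if i = m then 1 else 0) * (G$m$j)) = (\<Sum>m\<in>UNIV. (if i = m then G$m$j else 0))"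
        by (rule sum.cong) auto
      then show ?thesis by simp
    qed
    ultimately show ?thesis
      by (auto simp: vec_eq_iff matrix_matrix_mult_def mat_def)
  qed
  show ?thesis unfolding eq det_mul det_id_row by simp
qed

definition outer :: "real^'n::finite \<Rightarrow> real^'n \<Rightarrow> real^'n^'n" where
  "outer u v = (\<chi> i j. u$i * v$j)"

lemma det_rank1_aux:
  fixes G :: "real^'n::finite^'n"
  assumes "j \<notin> S"
  shows "det (\<chi> l. if l = j then v else (if l \<in> S then G$l + u$l *s v else G$l))
       = det (\<chi> l. if l = j then v else G$l)"
proof -
  have "finite S" by simp
  then show ?thesis using assms
  proof (induction S rule: finite_induct)
    case empty
    show ?case by (rule arg_cong[where f=det]) (simp add: vec_eq_iff)
  next
    case (insert i S)
    let ?Y = "(\<chi> l. if l = j then v else (if l \<in> S then G$l + u$l *s v else G$l)) :: real^'n^'n"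
    have ij: "i \<noteq> j" using insert by auto
    have "(\<chi> l. if l = j then v else (if l \<in> insert i S then G$l + u$l *s v else G$l))
        = (\<chi> l. if l = i then row i ?Y + (u$i) *s row j ?Y else row l ?Y)"
      using insert.hyps ij by (auto simp: vec_eq_iff row_def)
    then have "det (\<chi> l. if l = j then v else (if l \<in> insert i S then G$l + u$l *s v else G$l)) = det ?Y"
      using det_row_operation[OF ij, of ?Y "u$i"] by simp
    also have "\<dots> = det (\<chi> l. if l = j then v else G$l)" using insert by auto
    finally show ?case .
  qed
qed

lemma det_rank1_sum:
  fixes G :: "real^'n::finite^'n"
  shows "det (G + outer u v) = det G + (\<Sum>i\<in>UNIV. u$i * det (\<chi> l. if l = i then v else G$l))"
proof -
  have main: "det (\<chi> l. if l \<in> S then G$l + u$l *s v else G$l)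
      = det G + (\<Sum>i\<in>S. u$i * det (\<chi> l. if l = i then v else G$l))" for S :: "'n set"
  proof -
    have "finite S" by simp
    then show ?thesis
    proof (induction S rule: finite_induct)
      case empty
      then show ?case by (simp add: vec_eq_iff)
    next
      case (insert j S)
      let ?Z = "(\<chi> l. if l \<in> S then G$l + u$l *s v else G$l) :: real^'n^'n"
      have e1: "(\<chi> l. if l \<in> insert j S then G$l + u$l *s v else G$l)
          = (\<chi> l. if l = j then row l ?Z + u$j *s v else row l ?Z)"
        using insert.hyps by (auto simp: vec_eq_iff row_def)
      have e2: "(\<chi> l. if l = j then row l ?Z else row l ?Z) = ?Z" by (simp add: vec_eq_iff row_def)
      have e3: "(\<chi> l. if l = j then v else row l ?Z) = (\<chi> l. if l = j then v else (if l \<in> S then G$l + u$l *s v else G$l))"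
        by (simp add: vec_eq_iff row_def)
      have "det (\<chi> l. if l \<in> insert j S then G$l + u$l *s v else G$l)
          = det ?Z + u$j * det (\<chi> l. if l = j then v else row l ?Z)"
        unfolding e1 det_row_add[of j "\<lambda>l. row l ?Z" "\<lambda>l. u$j *s v" "\<lambda>l. row l ?Z"]
          det_row_mul[of j "u$j" "\<lambda>l. v" "\<lambda>l. row l ?Z"] e2 by simp
      also have "det (\<chi> l. if l = j then v else row l ?Z) = det (\<chi> l. if l = j then v else G$l)"
        unfolding e3 by (rule det_rank1_aux) (use insert in auto)
      finally show ?case using insert by (simp add: algebra_simps)
    qed
  qed
  have "G + outer u v = (\<chi> l. if l \<in> UNIV then G$l + u$l *s v else G$l)"
    by (simp add: vec_eq_iff outer_def)
  then show ?thesis using main[of UNIV] by simp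
qed

definition bil :: "real^'n::finite \<Rightarrow> real^'n^'n \<Rightarrow> real^'n \<Rightarrow> real" where
  "bil v X w = (\<Sum>i\<in>UNIV. \<Sum>j\<in>UNIV. v$i * X$i$j * w$j)"

lemma det_rank1:
  fixes G :: "real^'n::finite^'n"
  assumes "invertible G"
  shows "det (G + outer u v) = det G * (1 + bil v (matrix_inv G) u)"
proof -
  have "det (G + outer u v) = det G + (\<Sum>i\<in>UNIV. u$i * ((\<Sum>l\<in>UNIV. v$l * matrix_inv G$l$i) * det G))"
    unfolding det_rank1_sum det_row_replace[OF assms] ..
  also have "\<dots> = det G * (1 + bil v (matrix_inv G) u)"
  proof -
    have "(\<Sum>i\<in>UNIV. u$i * ((\<Sum>l\<in>UNIV. v$l * matrix_inv G$l$i) * det G))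
       = det G * (\<Sum>i\<in>UNIV. \<Sum>l\<in>UNIV. v$l * matrix_inv G$l$i * u$i)"
      by (simp add: sum_distrib_left sum_distrib_right algebra_simps)
    also have "(\<Sum>i\<in>UNIV. \<Sum>l\<in>UNIV. v$l * matrix_inv G$l$i * u$i) = bil v (matrix_inv G) u"
      unfolding bil_def by (rule sum.swap)
    finally show ?thesis by (simp add: algebra_simps)
  qed
  finally show ?thesis .
qed


lemma deriv_det:
  fixes Gf :: "real \<Rightarrow> real^'n::finite^'n" and D :: "real^'n^'n"
  assumes der: "\<And>i j. ((\<lambda>s. Gf s$i$j) has_real_derivative D$i$j) (at t)"
  shows "((\<lambda>s. det (Gf s)) has_real_derivative
           (\<Sum>k\<in>UNIV. det (\<chi> i. if i = k then D$i else Gf t$i))) (at t)"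
proof -
  let ?P = "{p. p permutes (UNIV::'n set)}"
  have dp: "((\<lambda>s. prod (\<lambda>i. Gf s$i$p i) UNIV) has_real_derivative
       (\<Sum>i\<in>UNIV. D$i$p i * prod (\<lambda>j. Gf t$j$p j) (UNIV - {i}))) (at t)" for p
    by (rule has_field_derivative_prod) (rule der)
  have d1: "((\<lambda>s. det (Gf s)) has_real_derivative
       (\<Sum>p\<in>?P. of_int (sign p) * (\<Sum>i\<in>UNIV. D$i$p i * prod (\<lambda>j. Gf t$j$p j) (UNIV - {i})))) (at t)"
    unfolding det_def
    by (rule DERIV_sum) (rule DERIV_cmult, rule dp)
  have "(\<Sum>p\<in>?P. of_int (sign p) * (\<Sum>i\<in>UNIV. D$i$p i * prod (\<lambda>j. Gf t$j$p j) (UNIV - {i})))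
      = (\<Sum>p\<in>?P. \<Sum>k\<in>UNIV. of_int (sign p) * (D$k$p k * prod (\<lambda>j. Gf t$j$p j) (UNIV - {k})))"
    by (simp add: sum_distrib_left)
  also have "\<dots> = (\<Sum>k\<in>UNIV. \<Sum>p\<in>?P. of_int (sign p) * (D$k$p k * prod (\<lambda>j. Gf t$j$p j) (UNIV - {k})))"
    by (rule sum.swap)
  also have "\<dots> = (\<Sum>k\<in>UNIV. det (\<chi> i. if i = k then D$i else Gf t$i))"
  proof (rule sum.cong[OF refl])
    fix k
    show "(\<Sum>p\<in>?P. of_int (sign p) * (D$k$p k * prod (\<lambda>j. Gf t$j$p j) (UNIV - {k})))
        = det (\<chi> i. if i = k then D$i else Gf t$i)"
      unfolding det_def
    proof (rule sum.cong[OF refl])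
      fix p
      have "prod (\<lambda>i. (\<chi> i. if i = k then D$i else Gf t$i)$i$p i) UNIV
          = (\<chi> i. if i = k then D$i else Gf t$i)$k$p k * prod (\<lambda>i. (\<chi> i. if i = k then D$i else Gf t$i)$i$p i) (UNIV - {k})"
        by (subst prod.remove[of UNIV k]) auto
      also have "prod (\<lambda>i. (\<chi> i. if i = k then D$i else Gf t$i)$i$p i) (UNIV - {k})
          = prod (\<lambda>j. Gf t$j$p j) (UNIV - {k})"
        by (rule prod.cong) auto
      finally show "of_int (sign p) * (D$k$p k * prod (\<lambda>j. Gf t$j$p j) (UNIV - {k}))
          = of_int (sign p) * prod (\<lambda>i. (\<chi> i. if i = k then D$i else Gf t$i)$i$p i) UNIV"
        by simp
    qed
  qed
  finally show ?thesis using d1 by simp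
qed

lemma deriv_inv:
  fixes Gf :: "real \<Rightarrow> real^'n::finite^'n" and D :: "real^'n^'n"
  assumes inv: "\<And>s. invertible (Gf s)"
    and der: "\<And>i j. ((\<lambda>s. Gf s$i$j) has_real_derivative D$i$j) (at t)"
  shows "((\<lambda>s. matrix_inv (Gf s)$i$j) has_real_derivative
     - (\<Sum>k\<in>UNIV. \<Sum>l\<in>UNIV. matrix_inv (Gf t)$i$k * D$k$l * matrix_inv (Gf t)$l$j)) (at t)"
proof -
  define Nf where "Nf = (\<lambda>i j s. det (\<chi> l. if l = j then axis i (1::real) else Gf s$l))"
  define dN where "dN = (\<lambda>i j. \<Sum>k\<in>UNIV. det (\<chi> r. if r = k then (\<chi> l. if l = j then 0 else D$l)$r
                          else (\<chi> l. if l = j then axis i (1::real) else Gf t$l)$r))"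
  define dG where "dG = (\<Sum>k\<in>UNIV. det (\<chi> r. if r = k then D$r else Gf t$r))"
  have detnz: "det (Gf s) \<noteq> 0" for s using inv invertible_det_nz by blast
  have rep: "matrix_inv (Gf s)$i$j = Nf i j s / det (Gf s)" for i j s
  proof -
    have "Nf i j s = (\<Sum>l\<in>UNIV. axis i 1 $ l * matrix_inv (Gf s)$l$j) * det (Gf s)"
      unfolding Nf_def by (rule det_row_replace[OF inv])
    also have "(\<Sum>l\<in>UNIV. axis i (1::real) $ l * matrix_inv (Gf s)$l$j) = matrix_inv (Gf s)$i$j"
    proof -
      have "(\<Sum>l\<in>UNIV. axis i (1::real) $ l * matrix_inv (Gf s)$l$j) = (\<Sum>l\<in>UNIV. if l = i then matrix_inv (Gf s)$l$j else 0)"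
        by (rule sum.cong) (auto simp: axis_def)
      then show ?thesis by simp
    qed
    finally show ?thesis using detnz[of s] by simp
  qed
  have dNf: "((Nf i j) has_real_derivative dN i j) (at t)" for i j
    unfolding Nf_def dN_def
    by (rule deriv_det) (auto intro: der)
  have dDet: "((\<lambda>s. det (Gf s)) has_real_derivative dG) (at t)"
    unfolding dG_def by (rule deriv_det) (rule der)
  define d where "d = (\<lambda>i j. (dN i j * det (Gf t) - Nf i j t * dG) / (det (Gf t) * det (Gf t)))"
  have dI: "((\<lambda>s. matrix_inv (Gf s)$i$j) has_real_derivative d i j) (at t)" for i j
  proof -
    have "((\<lambda>s. Nf i j s / det (Gf s)) has_real_derivative d i j) (at t)"
      unfolding d_def by (rule DERIV_divide[OF dNf dDet detnz])
    then show ?thesis by (simp add: rep)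
  qed
  have key: "(\<Sum>k\<in>UNIV. D$a$k * matrix_inv (Gf t)$k$b + Gf t$a$k * d k b) = 0" for a b
  proof -
    have "((\<lambda>s. \<Sum>k\<in>UNIV. Gf s$a$k * matrix_inv (Gf s)$k$b) has_real_derivative
           (\<Sum>k\<in>UNIV. D$a$k * matrix_inv (Gf t)$k$b + Gf t$a$k * d k b)) (at t)"
      by (rule DERIV_sum) (rule DERIV_mult'[THEN DERIV_cong], rule der, rule dI, simp add: algebra_simps)
    moreover have "((\<lambda>s. \<Sum>k\<in>UNIV. Gf s$a$k * matrix_inv (Gf s)$k$b) has_real_derivative 0) (at t)"
      by (simp add: inv_entries[OF inv])
    ultimately show ?thesis by (rule DERIV_unique)
  qed
  have "d i j = (\<Sum>a\<in>UNIV. (if i = a then 1 else 0) * d a j)"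
  proof -
    have "(\<Sum>a\<in>UNIV. (if i = a then 1 else 0) * d a j) = (\<Sum>a\<in>UNIV. if i = a then d a j else 0)"
      by (rule sum.cong) auto
    then show ?thesis by simp
  qed
  also have "\<dots> = (\<Sum>a\<in>UNIV. (\<Sum>k\<in>UNIV. matrix_inv (Gf t)$i$k * Gf t$k$a) * d a j)"
    by (simp add: inv_entries[OF inv])
  also have "\<dots> = (\<Sum>a\<in>UNIV. \<Sum>k\<in>UNIV. matrix_inv (Gf t)$i$k * (Gf t$k$a * d a j))"
    by (simp add: sum_distrib_right mult.assoc)
  also have "\<dots> = (\<Sum>k\<in>UNIV. \<Sum>a\<in>UNIV. matrix_inv (Gf t)$i$k * (Gf t$k$a * d a j))"
    by (rule sum.swap)
  also have "\<dots> = (\<Sum>k\<in>UNIV. matrix_inv (Gf t)$i$k * (\<Sum>a\<in>UNIV. Gf t$k$a * d a j))"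
    by (simp add: sum_distrib_left)
  also have "\<dots> = (\<Sum>k\<in>UNIV. matrix_inv (Gf t)$i$k * (- (\<Sum>l\<in>UNIV. D$k$l * matrix_inv (Gf t)$l$j)))"
  proof (rule sum.cong[OF refl])
    fix k
    have "(\<Sum>a\<in>UNIV. Gf t$k$a * d a j) = - (\<Sum>l\<in>UNIV. D$k$l * matrix_inv (Gf t)$l$j)"
      using key[of k j] by (simp add: sum.distrib eq_neg_iff_add_eq_0 add.commute)
    then show "matrix_inv (Gf t)$i$k * (\<Sum>a\<in>UNIV. Gf t$k$a * d a j)
        = matrix_inv (Gf t)$i$k * (- (\<Sum>l\<in>UNIV. D$k$l * matrix_inv (Gf t)$l$j))" by simp
  qed
  also have "\<dots> = - (\<Sum>k\<in>UNIV. \<Sum>l\<in>UNIV. matrix_inv (Gf t)$i$k * D$k$l * matrix_inv (Gf t)$l$j)"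
    by (simp add: sum_distrib_left sum_negf mult.assoc)
  finally show ?thesis using dI[of i j] by simp
qed


lemma bil_alt1: "bil v X u = (\<Sum>i\<in>UNIV. v$i * (\<Sum>j\<in>UNIV. X$i$j * u$j))"
  unfolding bil_def by (simp add: sum_distrib_left mult.assoc)

lemma bil_alt2: "bil v X u = (\<Sum>j\<in>UNIV. (\<Sum>i\<in>UNIV. v$i * X$i$j) * u$j)"
  unfolding bil_def by (subst sum.swap) (simp add: sum_distrib_right)

lemma cont_eq_at:
  fixes f g :: "real \<Rightarrow> real"
  assumes "isCont f a" "isCont g a" "\<And>t. t \<noteq> a \<Longrightarrow> f t = g t"
  shows "f a = g a"
proof -
  have "g \<midarrow>a\<rightarrow> g a" using assms(2) by (simp add: isCont_def)
  then have "f \<midarrow>a\<rightarrow> g a" using LIM_equal[of a f g "g a"] assms(3) by blast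
  moreover have "f \<midarrow>a\<rightarrow> f a" using assms(1) by (simp add: isCont_def)
  ultimately show ?thesis using LIM_unique by blast
qed

lemma det_rank2:
  fixes G :: "real^'n::finite^'n"
  assumes inv: "invertible G"
  shows "det (G + outer u1 v1 + outer u2 v2) = det G *
    ((1 + bil v1 (matrix_inv G) u1) * (1 + bil v2 (matrix_inv G) u2)
      - bil v1 (matrix_inv G) u2 * bil v2 (matrix_inv G) u1)"
proof -
  define Gi where "Gi = matrix_inv G"
  define m11 where "m11 = bil v1 Gi u1"
  define m12 where "m12 = bil v1 Gi u2"
  define m21 where "m21 = bil v2 Gi u1"
  define m22 where "m22 = bil v2 Gi u2"
  define w where "w = (\<chi> i. \<Sum>a\<in>UNIV. Gi$i$a * u1$a)"
  define z where "z = (\<chi> j. \<Sum>b\<in>UNIV. v1$b * Gi$b$j)"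
  have Gw: "(\<Sum>k\<in>UNIV. G$i$k * w$k) = u1$i" for i
  proof -
    have "(\<Sum>k\<in>UNIV. G$i$k * w$k) = (\<Sum>k\<in>UNIV. \<Sum>a\<in>UNIV. G$i$k * Gi$k$a * u1$a)"
      by (simp add: w_def sum_distrib_left mult.assoc)
    also have "\<dots> = (\<Sum>a\<in>UNIV. \<Sum>k\<in>UNIV. G$i$k * Gi$k$a * u1$a)" by (rule sum.swap)
    also have "\<dots> = (\<Sum>a\<in>UNIV. (\<Sum>k\<in>UNIV. G$i$k * Gi$k$a) * u1$a)" by (simp add: sum_distrib_right)
    also have "\<dots> = (\<Sum>a\<in>UNIV. (if i = a then u1$a else 0))"
      unfolding Gi_def inv_entries[OF inv] by (rule sum.cong) auto
    finally show ?thesis by simp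
  qed
  have vw: "(\<Sum>k\<in>UNIV. v$k * w$k) = bil v Gi u1" for v
    unfolding bil_alt1 w_def by simp
  have zu: "(\<Sum>k\<in>UNIV. z$k * u$k) = bil v1 Gi u" for u
    unfolding bil_alt2 z_def by simp
  have stepA: "det (G + outer (t *s u1) v1 + outer u2 v2) = det G * ((1 + t*m11) * (1 + m22) - t * m12 * m21)"
    if tnz: "1 + t * m11 \<noteq> 0" for t
  proof -
    define Gt where "Gt = G + outer (t *s u1) v1"
    define s where "s = t / (1 + t * m11)"
    define Gti where "Gti = (\<chi> i j. Gi$i$j - s * w$i * z$j)"
    have bilt: "bil v1 Gi (t *s u1) = t * m11"
      unfolding m11_def bil_def by (simp add: sum_distrib_left algebra_simps)
    have dGt: "det Gt = det G * (1 + t * m11)"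
      unfolding Gt_def det_rank1[OF inv] bilt Gi_def[symmetric] ..
    have prod1: "Gt ** Gti = mat 1"
    proof -
      have e: "(\<Sum>k\<in>UNIV. (G$i$k + t * u1$i * v1$k) * (Gi$k$j - s * w$k * z$j)) = (if i = j then 1 else 0)" for i j
      proof -
        have "(\<Sum>k\<in>UNIV. (G$i$k + t * u1$i * v1$k) * (Gi$k$j - s * w$k * z$j))
          = (\<Sum>k\<in>UNIV. G$i$k * Gi$k$j) - (\<Sum>k\<in>UNIV. G$i$k * (s * w$k * z$j))
            + (\<Sum>k\<in>UNIV. t * u1$i * v1$k * Gi$k$j) - (\<Sum>k\<in>UNIV. t * u1$i * v1$k * (s * w$k * z$j))"
          by (simp add: distrib_right right_diff_distrib sum.distrib sum_subtractf)
        also have "(\<Sum>k\<in>UNIV. G$i$k * (s * w$k * z$j)) = s * z$j * (\<Sum>k\<in>UNIV. G$i$k * w$k)"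
          by (simp add: sum_distrib_left mult_ac)
        also have "(\<Sum>k\<in>UNIV. t * u1$i * v1$k * Gi$k$j) = t * u1$i * (\<Sum>k\<in>UNIV. v1$k * Gi$k$j)"
          by (simp add: sum_distrib_left mult_ac)
        also have "(\<Sum>k\<in>UNIV. t * u1$i * v1$k * (s * w$k * z$j)) = t * s * u1$i * z$j * (\<Sum>k\<in>UNIV. v1$k * w$k)"
          by (simp add: sum_distrib_left mult_ac)
        also have "(\<Sum>k\<in>UNIV. v1$k * Gi$k$j) = z$j" by (simp add: z_def)
        also have "(\<Sum>k\<in>UNIV. G$i$k * Gi$k$j) = (if i = j then 1 else 0)"
          unfolding Gi_def by (rule inv_entries[OF inv])
        also note Gw
        also note vw
        finally have "(\<Sum>k\<in>UNIV. (G$i$k + t * u1$i * v1$k) * (Gi$k$j - s * w$k * z$j))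
            = (if i = j then 1 else 0) + u1$i * z$j * (t - s * (1 + t * m11))"
          unfolding m11_def[symmetric] by (simp add: algebra_simps)
        also have "t - s * (1 + t * m11) = 0" unfolding s_def using tnz by simp
        finally show ?thesis by simp
      qed
      have "(Gt ** Gti)$i$j = (\<Sum>k\<in>UNIV. (G$i$k + t * u1$i * v1$k) * (Gi$k$j - s * w$k * z$j))" for i j
        unfolding Gt_def Gti_def by (simp add: matrix_matrix_mult_def outer_def)
      then show ?thesis using e by (simp add: vec_eq_iff mat_def)
    qed
    have invGt: "invertible Gt" and GtiEq: "matrix_inv Gt = Gti" using inv_unique[OF prod1] by auto
    have bil2: "bil v2 Gti u2 = m22 - s * m21 * m12"
    proof -
      have "bil v2 Gti u2 = (\<Sum>i\<in>UNIV. \<Sum>j\<in>UNIV. v2$i * Gi$i$j * u2$j - s * (v2$i * w$i) * (z$j * u2$j))"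
        unfolding bil_def Gti_def by (simp add: algebra_simps)
      also have "\<dots> = bil v2 Gi u2 - s * (\<Sum>i\<in>UNIV. v2$i * w$i) * (\<Sum>j\<in>UNIV. z$j * u2$j)"
      proof -
        have x: "(\<Sum>i\<in>UNIV. \<Sum>j\<in>UNIV. s * (v2$i * w$i) * (z$j * u2$j)) = s * (\<Sum>i\<in>UNIV. v2$i * w$i) * (\<Sum>j\<in>UNIV. z$j * u2$j)"
          unfolding mult.assoc[of s] sum_product by (simp add: sum_distrib_left mult.assoc)
        show ?thesis unfolding bil_def sum_subtractf x ..
      qed
      finally have "bil v2 Gti u2 = bil v2 Gi u2 - s * (\<Sum>i\<in>UNIV. v2$i * w$i) * (\<Sum>j\<in>UNIV. z$j * u2$j)" .
      then show ?thesis unfolding vw zu m22_def m21_def m12_def by simp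
    qed
    have "det (Gt + outer u2 v2) = det Gt * (1 + bil v2 (matrix_inv Gt) u2)"
      by (rule det_rank1[OF invGt])
    also have "\<dots> = det G * ((1 + t*m11) * (1 + m22) - t * m12 * m21)"
      unfolding GtiEq bil2 dGt s_def using tnz by (simp add: field_simps)
    finally show ?thesis unfolding Gt_def .
  qed
  show ?thesis
  proof (cases "1 + m11 = 0")
    case False
    then show ?thesis using stepA[of 1] unfolding m11_def m12_def m21_def m22_def Gi_def by simp
  next
    case True
    define f where "f = (\<lambda>t. det (G + outer (t *s u1) v1 + outer u2 v2))"
    define g where "g = (\<lambda>t. det G * ((1 + t*m11) * (1 + m22) - t * m12 * m21))"
    have "isCont f 1"
    proof -
      have "((\<lambda>t. (G + outer (t *s u1) v1 + outer u2 v2)$i$j) has_real_derivative (outer u1 v1)$i$j) (at 1)" for i j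
        by (auto simp: outer_def intro!: derivative_eq_intros)
      from deriv_det[OF this] show ?thesis unfolding f_def by (rule DERIV_isCont)
    qed
    moreover have "isCont g 1" unfolding g_def by (intro continuous_intros)
    moreover have "f t = g t" if "t \<noteq> 1" for t
    proof -
      have "m11 = -1" using True by simp
      then have "1 + t * m11 \<noteq> 0" using that by simp
      then show ?thesis unfolding f_def g_def by (rule stepA)
    qed
    ultimately have "f 1 = g 1" by (rule cont_eq_at)
    then show ?thesis unfolding f_def g_def m11_def m12_def m21_def m22_def Gi_def by simp
  qed
qed


lemma bil_add_left: "bil (v + w) X u = bil v X u + bil w X u"
  unfolding bil_def by (simp add: algebra_simps sum.distrib)
lemma bil_scale_left: "bil (a *s v) X u = a * bil v X u"
  unfolding bil_def by (simp add: algebra_simps sum_distrib_left)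
lemma bil_add_right: "bil v X (u + w) = bil v X u + bil v X w"
  unfolding bil_def by (simp add: algebra_simps sum.distrib)
lemma bil_scale_right: "bil v X (a *s u) = a * bil v X u"
  unfolding bil_def by (simp add: algebra_simps sum_distrib_left)
lemmas bil_lin = bil_add_left bil_scale_left bil_add_right bil_scale_right

lemma sc_core:
  fixes x y p z C D :: real
  assumes "p - x \<noteq> 0" "x - y \<noteq> 0" "x + z \<noteq> 0" "y - z \<noteq> 0"
  shows "C * ((x - z) / (x + z)) / (p - x) * (D * ((y + z) / (y - z)) / (x - y))
      = C / (p - x) * (D / (x - y)) + C / (p - x) / (x + z) * (2 * z * (D / (y - z)))"
  using assms by (simp add: divide_simps) (simp add: algebra_simps)

locale toda =
  fixes M Mb c cb :: "real^'n::finite"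
  assumes neq: "\<And>j k. Mb$j \<noteq> M$k"
begin

definition AA :: "('n \<Rightarrow> real) \<Rightarrow> real^'n^'n" where
  "AA E = (\<chi> i k. c$k * E k / (Mb$i - M$k))"
definition BB :: "('n \<Rightarrow> real) \<Rightarrow> real^'n^'n" where
  "BB Eb = (\<chi> k j. cb$j * Eb j / (M$k - Mb$j))"
definition GG :: "('n \<Rightarrow> real) \<Rightarrow> ('n \<Rightarrow> real) \<Rightarrow> real^'n^'n" where
  "GG E Eb = mat 1 + AA E ** BB Eb"
definition av :: "('n \<Rightarrow> real) \<Rightarrow> real \<Rightarrow> real^'n" where
  "av E \<beta> = (\<chi> i. \<Sum>k\<in>UNIV. AA E$i$k / (M$k - \<beta>))"
definition bv :: "('n \<Rightarrow> real) \<Rightarrow> real \<Rightarrow> real^'n" where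
  "bv Eb \<alpha> = (\<chi> j. cb$j * Eb j / (Mb$j - \<alpha>))"
definition IG :: "('n \<Rightarrow> real) \<Rightarrow> ('n \<Rightarrow> real) \<Rightarrow> real^'n^'n" where
  "IG E Eb = matrix_inv (GG E Eb)"
definition gg :: "('n \<Rightarrow> real) \<Rightarrow> ('n \<Rightarrow> real) \<Rightarrow> real \<Rightarrow> real \<Rightarrow> real" where
  "gg E Eb \<alpha> \<beta> = bil (bv Eb \<alpha>) (IG E Eb) (av E \<beta>)"
definition Esh :: "real \<Rightarrow> ('n \<Rightarrow> real) \<Rightarrow> 'n \<Rightarrow> real" where
  "Esh z E = (\<lambda>k. E k * ((M$k - z) / (M$k + z)))"
definition Ebsh :: "real \<Rightarrow> ('n \<Rightarrow> real) \<Rightarrow> 'n \<Rightarrow> real" where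
  "Ebsh z Eb = (\<lambda>k. Eb k * ((Mb$k + z) / (Mb$k - z)))"

lemma GG_entry: "GG E Eb $i$j = (if i = j then 1 else 0) + (\<Sum>k\<in>UNIV. AA E$i$k * BB Eb$k$j)"
  unfolding GG_def by (simp add: matrix_matrix_mult_def mat_def)

lemma shift1:
  assumes p1: "\<And>k. M$k + z \<noteq> 0" and p2: "\<And>k. Mb$k - z \<noteq> 0"
  shows "GG (Esh z E) (Ebsh z Eb) = GG E Eb + outer (av E (-z)) ((2*z) *s bv Eb z)"
proof -
  have sc: "c$k * (E k * ((M$k - z) / (M$k + z))) / (Mb$i - M$k) *
        (cb$j * (Eb j * ((Mb$j + z) / (Mb$j - z))) / (M$k - Mb$j))
      = c$k * E k / (Mb$i - M$k) * (cb$j * Eb j / (M$k - Mb$j))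
        + c$k * E k / (Mb$i - M$k) / (M$k + z) * (2 * z * (cb$j * Eb j / (Mb$j - z)))" for i j k
  proof -
    have a: "Mb$i - M$k \<noteq> 0" "M$k - Mb$j \<noteq> 0" using neq[of i k] neq[of j k] by auto
    show ?thesis using sc_core[OF a p1[of k] p2[of j], of "c$k * E k" "cb$j * Eb j"] by (simp add: mult.assoc)
  qed
  have "GG (Esh z E) (Ebsh z Eb) $i$j = (GG E Eb + outer (av E (-z)) ((2*z) *s bv Eb z))$i$j" for i j
  proof -
    have "GG (Esh z E) (Ebsh z Eb) $i$j = (if i = j then 1 else 0) + (\<Sum>k\<in>UNIV.
        c$k * (E k * ((M$k - z) / (M$k + z))) / (Mb$i - M$k) *
        (cb$j * (Eb j * ((Mb$j + z) / (Mb$j - z))) / (M$k - Mb$j)))"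
      unfolding GG_entry by (simp add: AA_def BB_def Esh_def Ebsh_def)
    also have "\<dots> = (if i = j then 1 else 0) + (\<Sum>k\<in>UNIV. c$k * E k / (Mb$i - M$k) * (cb$j * Eb j / (M$k - Mb$j)))
        + (\<Sum>k\<in>UNIV. c$k * E k / (Mb$i - M$k) / (M$k + z)) * (2 * z * (cb$j * Eb j / (Mb$j - z)))"
      unfolding sc sum.distrib sum_distrib_right by simp
    also have "\<dots> = (GG E Eb + outer (av E (-z)) ((2*z) *s bv Eb z))$i$j"
      by (simp add: GG_entry AA_def BB_def outer_def av_def bv_def)
    finally show ?thesis .
  qed
  then show ?thesis by (simp add: vec_eq_iff)
qed

end


lemma T_alg:
  fixes z1 z2 g11 g12 g21 g22 X11 X12 X21 X22 :: real
  assumes nz: "z1 \<noteq> 0" "z2 \<noteq> 0" "z1 + z2 \<noteq> 0" "z1 - z2 \<noteq> 0"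
    and h: "(-z1-z1)*g11 = 1 - X11" "(-z1-z2)*g12 = 1 - X12" "(-z2-z1)*g21 = 1 - X21" "(-z2-z2)*g22 = 1 - X22"
  shows "(1 + 2*z1*g11) * (1 + 2*z2*((2*z1/(z1-z2))*((-2*z1/(z2-z1))*g11 + ((z1+z2)/(z2-z1))*g12)
           + ((z1+z2)/(z2-z1))*((-2*z1/(z2-z1))*g21 + ((z1+z2)/(z2-z1))*g22)))
       - (2*z1*((-2*z1/(z2-z1))*g11 + ((z1+z2)/(z2-z1))*g12)) * (2*z2*((2*z1/(z1-z2))*g11 + ((z1+z2)/(z2-z1))*g21))
       = ((z1+z2)^2 * X11 * X22 - 4*z1*z2 * X12 * X21) / (z1-z2)^2"
proof -
  have e: "g11 = (1 - X11)/(-z1-z1)" "g12 = (1 - X12)/(-z1-z2)" "g21 = (1 - X21)/(-z2-z1)" "g22 = (1 - X22)/(-z2-z2)"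
    using h nz by (auto simp: field_simps)
  have nz2: "z2 - z1 \<noteq> 0" "-z1-z2 \<noteq> 0" "-z2-z1 \<noteq> 0" "-z1-z1 \<noteq> 0" "-z2-z2 \<noteq> 0" using nz by auto
  show ?thesis unfolding e using nz nz2 by (simp add: divide_simps power2_eq_square) (simp add: algebra_simps)
qed

lemma pf_a:
  fixes x z1 z2 :: real
  assumes "x + z1 \<noteq> 0" "x + z2 \<noteq> 0" "z1 - z2 \<noteq> 0"
  shows "(x - z1) / (x + z1) / (x + z2) = (-2*z1/(z2-z1)) / (x + z1) + ((z1+z2)/(z2-z1)) / (x + z2)"
proof -
  have "z2 - z1 \<noteq> 0" using assms by simp
  then show ?thesis using assms by (simp add: divide_simps) (simp add: algebra_simps)
qed

lemma pf_b:
  fixes y z1 z2 :: real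
  assumes "y - z1 \<noteq> 0" "y - z2 \<noteq> 0" "z1 - z2 \<noteq> 0"
  shows "(y + z1) / (y - z1) / (y - z2) = (2*z1/(z1-z2)) / (y - z1) + ((z1+z2)/(z2-z1)) / (y - z2)"
proof -
  have "z2 - z1 \<noteq> 0" using assms by simp
  then show ?thesis using assms by (simp add: divide_simps) (simp add: algebra_simps)
qed

lemma pf_a':
  fixes x z1 z2 C P :: real
  assumes "x + z1 \<noteq> 0" "x + z2 \<noteq> 0" "z1 - z2 \<noteq> 0" "P \<noteq> 0"
  shows "C * ((x - z1) / (x + z1)) / P / (x - - z2) = (-2*z1/(z2-z1)) * (C / P / (x - - z1)) + ((z1+z2)/(z2-z1)) * (C / P / (x - - z2))"
proof -
  have "z2 - z1 \<noteq> 0" using assms by simp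
  then show ?thesis using assms by (simp add: divide_simps) (simp add: algebra_simps)
qed

lemma pf_b':
  fixes y z1 z2 C :: real
  assumes "y - z1 \<noteq> 0" "y - z2 \<noteq> 0" "z1 - z2 \<noteq> 0"
  shows "C * ((y + z1) / (y - z1)) / (y - z2) = (2*z1/(z1-z2)) * (C / (y - z1)) + ((z1+z2)/(z2-z1)) * (C / (y - z2))"
proof -
  have "z2 - z1 \<noteq> 0" using assms by simp
  then show ?thesis using assms by (simp add: divide_simps) (simp add: algebra_simps)
qed

lemma rank2_inst:
  fixes G :: "real^'n::finite^'n"
  assumes inv: "invertible G"
  shows "det (G + outer u1 ((2*z1) *s v1) + outer (a1 *s u1 + a2 *s u2) ((2*z2) *s (b1 *s v1 + b2 *s v2)))
    = det G * ((1 + 2*z1*bil v1 (matrix_inv G) u1) * (1 + 2*z2*(b1*(a1*bil v1 (matrix_inv G) u1 + a2*bil v1 (matrix_inv G) u2)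
        + b2*(a1*bil v2 (matrix_inv G) u1 + a2*bil v2 (matrix_inv G) u2)))
      - (2*z1*(a1*bil v1 (matrix_inv G) u1 + a2*bil v1 (matrix_inv G) u2)) * (2*z2*(b1*bil v1 (matrix_inv G) u1 + b2*bil v2 (matrix_inv G) u1)))"
  unfolding det_rank2[OF inv] bil_lin by (simp add: algebra_simps)

context toda
begin

lemma av_sh:
  assumes "\<And>k. M$k + z1 \<noteq> 0" "\<And>k. M$k + z2 \<noteq> 0" "z1 - z2 \<noteq> 0"
  shows "av (Esh z1 E) (-z2) = (-2*z1/(z2-z1)) *s av E (-z1) + ((z1+z2)/(z2-z1)) *s av E (-z2)"
proof -
  have "av (Esh z1 E) (-z2) $ i = ((-2*z1/(z2-z1)) *s av E (-z1) + ((z1+z2)/(z2-z1)) *s av E (-z2)) $ i" for i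
  proof -
    have "av (Esh z1 E) (-z2) $ i = (\<Sum>k\<in>UNIV. c$k * (E k * ((M$k - z1) / (M$k + z1))) / (Mb$i - M$k) / (M$k - - z2))"
      unfolding av_def AA_def Esh_def vec_lambda_beta ..
    also have "\<dots> = (\<Sum>k\<in>UNIV. (-2*z1/(z2-z1)) * (c$k * E k / (Mb$i - M$k) / (M$k - - z1))
                      + ((z1+z2)/(z2-z1)) * (c$k * E k / (Mb$i - M$k) / (M$k - - z2)))"
    proof (rule sum.cong[OF refl])
      fix k
      have P: "Mb$i - M$k \<noteq> 0" using neq[of i k] by simp
      show "c$k * (E k * ((M$k - z1) / (M$k + z1))) / (Mb$i - M$k) / (M$k - - z2) =
        (-2*z1/(z2-z1)) * (c$k * E k / (Mb$i - M$k) / (M$k - - z1))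
                      + ((z1+z2)/(z2-z1)) * (c$k * E k / (Mb$i - M$k) / (M$k - - z2))"
        using pf_a'[OF assms(1,2,3) P, of "c$k * E k"] by (simp add: mult.assoc)
    qed
    also have "\<dots> = ((-2*z1/(z2-z1)) *s av E (-z1) + ((z1+z2)/(z2-z1)) *s av E (-z2)) $ i"
      unfolding av_def AA_def vec_lambda_beta vector_add_component vector_smult_component sum.distrib sum_distrib_left ..
    finally show ?thesis .
  qed
  then show ?thesis by (simp add: vec_eq_iff)
qed

lemma bv_sh:
  assumes "\<And>k. Mb$k - z1 \<noteq> 0" "\<And>k. Mb$k - z2 \<noteq> 0" "z1 - z2 \<noteq> 0"
  shows "bv (Ebsh z1 Eb) z2 = (2*z1/(z1-z2)) *s bv Eb z1 + ((z1+z2)/(z2-z1)) *s bv Eb z2"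
proof -
  have "bv (Ebsh z1 Eb) z2 $ j = ((2*z1/(z1-z2)) *s bv Eb z1 + ((z1+z2)/(z2-z1)) *s bv Eb z2) $ j" for j
  proof -
    have "bv (Ebsh z1 Eb) z2 $ j = cb$j * (Eb j * ((Mb$j + z1) / (Mb$j - z1))) / (Mb$j - z2)"
      unfolding bv_def Ebsh_def vec_lambda_beta ..
    also have "\<dots> = (2*z1/(z1-z2)) * (cb$j * Eb j / (Mb$j - z1)) + ((z1+z2)/(z2-z1)) * (cb$j * Eb j / (Mb$j - z2))"
      using pf_b'[OF assms(1,2,3), of "cb$j * Eb j"] by (simp add: mult.assoc)
    also have "\<dots> = ((2*z1/(z1-z2)) *s bv Eb z1 + ((z1+z2)/(z2-z1)) *s bv Eb z2) $ j"
      unfolding bv_def vec_lambda_beta vector_add_component vector_smult_component ..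
    finally show ?thesis .
  qed
  then show ?thesis by (simp add: vec_eq_iff)
qed

lemma ratio2:
  assumes inv: "invertible (GG E Eb)"
    and p1: "\<And>k. M$k + z1 \<noteq> 0" "\<And>k. M$k + z2 \<noteq> 0" and p2: "\<And>k. Mb$k - z1 \<noteq> 0" "\<And>k. Mb$k - z2 \<noteq> 0"
    and d: "z1 - z2 \<noteq> 0"
  shows "det (GG (Esh z2 (Esh z1 E)) (Ebsh z2 (Ebsh z1 Eb))) = det (GG E Eb) *
    ((1 + 2*z1*gg E Eb z1 (-z1)) * (1 + 2*z2*((2*z1/(z1-z2))*((-2*z1/(z2-z1))*gg E Eb z1 (-z1) + ((z1+z2)/(z2-z1))*gg E Eb z1 (-z2))
           + ((z1+z2)/(z2-z1))*((-2*z1/(z2-z1))*gg E Eb z2 (-z1) + ((z1+z2)/(z2-z1))*gg E Eb z2 (-z2))))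
       - (2*z1*((-2*z1/(z2-z1))*gg E Eb z1 (-z1) + ((z1+z2)/(z2-z1))*gg E Eb z1 (-z2))) * (2*z2*((2*z1/(z1-z2))*gg E Eb z1 (-z1) + ((z1+z2)/(z2-z1))*gg E Eb z2 (-z1))))"
proof -
  have s1: "GG (Esh z1 E) (Ebsh z1 Eb) = GG E Eb + outer (av E (-z1)) ((2*z1) *s bv Eb z1)"
    by (rule shift1[OF p1(1) p2(1)])
  have s2: "GG (Esh z2 (Esh z1 E)) (Ebsh z2 (Ebsh z1 Eb)) = GG (Esh z1 E) (Ebsh z1 Eb)
       + outer (av (Esh z1 E) (-z2)) ((2*z2) *s bv (Ebsh z1 Eb) z2)"
    by (rule shift1[OF p1(2) p2(2)])
  show ?thesis
    unfolding s2 s1 av_sh[OF p1 d] bv_sh[OF p2 d] rank2_inst[OF inv]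
    unfolding gg_def IG_def[symmetric] ..
qed

end


lemma r0_scalar:
  fixes x y m C D :: real
  assumes "x - m \<noteq> 0" "m - y \<noteq> 0"
  shows "(x - y) * (C / (x - m) * (D / (m - y))) = C * (D / (m - y)) + C / (x - m) * D"
  using assms by (simp add: divide_simps) (simp add: algebra_simps)

lemma r2_scalar:
  fixes x m b C :: real
  assumes "x - m \<noteq> 0" "m - b \<noteq> 0" "x - b \<noteq> 0"
  shows "C / (x - m) / (m - b) = (C / (x - m) + C / (m - b)) / (x - b)"
  using assms by (simp add: divide_simps) (simp add: algebra_simps)

lemma r3_scalar:
  fixes x y a b s w g :: real
  assumes "x - a \<noteq> 0" "y - b \<noteq> 0"
  shows "(b - a) * (s / (x - a) * g * (w / (y - b))) = s * g * (w / (y - b)) - s / (x - a) * g * w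
     - s / (x - a) * ((x - y) * g) * (w / (y - b))"
  using assms by (simp add: divide_simps) (simp add: algebra_simps)

lemma sum_sum_prod: "(\<Sum>i\<in>A. \<Sum>j\<in>B. (f i::real) * g j) = (\<Sum>i\<in>A. f i) * (\<Sum>j\<in>B. g j)"
  by (simp add: sum_product)

context toda
begin

definition ones :: "real^'n" where "ones = (\<chi> i. 1)"
definition Ae :: "('n \<Rightarrow> real) \<Rightarrow> real^'n" where "Ae E = (\<chi> i. \<Sum>k\<in>UNIV. AA E$i$k)"
definition rt :: "('n \<Rightarrow> real) \<Rightarrow> ('n \<Rightarrow> real) \<Rightarrow> real^'n" where
  "rt E Eb = (\<chi> j. \<Sum>k\<in>UNIV. c$k * E k * BB Eb$k$j)"
definition sv :: "('n \<Rightarrow> real) \<Rightarrow> real^'n" where "sv Eb = (\<chi> j. cb$j * Eb j)"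
definition rho :: "('n \<Rightarrow> real) \<Rightarrow> real \<Rightarrow> real" where "rho E b = (\<Sum>k\<in>UNIV. c$k * E k / (M$k - b))"
definition p1 where "p1 E Eb a = bil (bv Eb a) (IG E Eb) ones"
definition p2 where "p2 E Eb a = 1 + bil (bv Eb a) (IG E Eb) (Ae E)"
definition q1 where "q1 E Eb b = rho E b - bil (rt E Eb) (IG E Eb) (av E b)"
definition q2 where "q2 E Eb b = 1 - bil (sv Eb) (IG E Eb) (av E b)"

lemma R0: "(Mb$k - Mb$l) * GG E Eb$k$l = rt E Eb $ l + Ae E $ k * sv Eb $ l"
proof -
  have "(Mb$k - Mb$l) * GG E Eb$k$l = (\<Sum>m\<in>UNIV. (Mb$k - Mb$l) * (c$m * E m / (Mb$k - M$m) * (cb$l * Eb l / (M$m - Mb$l))))"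
    unfolding GG_entry by (simp add: AA_def BB_def sum_distrib_left)
  also have "\<dots> = (\<Sum>m\<in>UNIV. c$m * E m * (cb$l * Eb l / (M$m - Mb$l)) + c$m * E m / (Mb$k - M$m) * (cb$l * Eb l))"
  proof (rule sum.cong[OF refl])
    fix m
    have "Mb$k - M$m \<noteq> 0" "M$m - Mb$l \<noteq> 0" using neq[of k m] neq[of l m] by auto
    then show "(Mb$k - Mb$l) * (c$m * E m / (Mb$k - M$m) * (cb$l * Eb l / (M$m - Mb$l)))
      = c$m * E m * (cb$l * Eb l / (M$m - Mb$l)) + c$m * E m / (Mb$k - M$m) * (cb$l * Eb l)"
      by (rule r0_scalar)
  qed
  also have "\<dots> = rt E Eb $ l + Ae E $ k * sv Eb $ l"
    by (simp add: rt_def Ae_def sv_def BB_def AA_def sum.distrib sum_distrib_right)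
  finally show ?thesis .
qed

lemma R1:
  assumes inv: "invertible (GG E Eb)"
  shows "(Mb$i - Mb$j) * IG E Eb$i$j = - ((\<Sum>k\<in>UNIV. IG E Eb$i$k) * (\<Sum>l\<in>UNIV. rt E Eb$l * IG E Eb$l$j)
     + (\<Sum>k\<in>UNIV. IG E Eb$i$k * Ae E$k) * (\<Sum>l\<in>UNIV. sv Eb$l * IG E Eb$l$j))"
proof -
  let ?G = "GG E Eb" and ?X = "IG E Eb"
  have iG1: "(\<Sum>l\<in>UNIV. ?G$k$l * ?X$l$j) = (if k = j then 1 else 0)" for k j
    unfolding IG_def by (rule inv_entries(1)[OF inv])
  have iG2: "(\<Sum>k\<in>UNIV. ?X$i$k * ?G$k$l) = (if i = l then 1 else 0)" for i l
    unfolding IG_def by (rule inv_entries(2)[OF inv])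
  define S where "S = (\<Sum>k\<in>UNIV. \<Sum>l\<in>UNIV. ?X$i$k * ((Mb$k - Mb$l) * ?G$k$l) * ?X$l$j)"
  have "S = (\<Sum>k\<in>UNIV. \<Sum>l\<in>UNIV. ?X$i$k * (rt E Eb $ l + Ae E $ k * sv Eb $ l) * ?X$l$j)"
    unfolding S_def R0 ..
  also have "\<dots> = (\<Sum>k\<in>UNIV. \<Sum>l\<in>UNIV. ?X$i$k * (rt E Eb $ l * ?X$l$j))
      + (\<Sum>k\<in>UNIV. \<Sum>l\<in>UNIV. (?X$i$k * Ae E $ k) * (sv Eb $ l * ?X$l$j))"
    by (simp add: algebra_simps sum.distrib)
  also have "\<dots> = (\<Sum>k\<in>UNIV. ?X$i$k) * (\<Sum>l\<in>UNIV. rt E Eb$l * ?X$l$j)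
     + (\<Sum>k\<in>UNIV. ?X$i$k * Ae E$k) * (\<Sum>l\<in>UNIV. sv Eb$l * ?X$l$j)"
    unfolding sum_sum_prod ..
  finally have S1: "S = \<dots>" .
  have "S = (\<Sum>k\<in>UNIV. \<Sum>l\<in>UNIV. ?X$i$k * Mb$k * (?G$k$l * ?X$l$j)) - (\<Sum>k\<in>UNIV. \<Sum>l\<in>UNIV. (?X$i$k * ?G$k$l) * (Mb$l * ?X$l$j))"
    unfolding S_def by (simp add: algebra_simps sum_subtractf)
  also have "(\<Sum>k\<in>UNIV. \<Sum>l\<in>UNIV. ?X$i$k * Mb$k * (?G$k$l * ?X$l$j)) = (\<Sum>k\<in>UNIV. ?X$i$k * Mb$k * (if k = j then 1 else 0))"
    by (simp add: sum_distrib_left[symmetric] iG1)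
  also have "\<dots> = ?X$i$j * Mb$j"
  proof -
    have "(\<Sum>k\<in>UNIV. ?X$i$k * Mb$k * (if k = j then 1 else 0)) = (\<Sum>k\<in>UNIV. if k = j then ?X$i$k * Mb$k else 0)"
      by (rule sum.cong) auto
    then show ?thesis by simp
  qed
  also have "(\<Sum>k\<in>UNIV. \<Sum>l\<in>UNIV. (?X$i$k * ?G$k$l) * (Mb$l * ?X$l$j)) = (\<Sum>l\<in>UNIV. \<Sum>k\<in>UNIV. (?X$i$k * ?G$k$l) * (Mb$l * ?X$l$j))"
    by (rule sum.swap)
  also have "\<dots> = (\<Sum>l\<in>UNIV. (if i = l then 1 else 0) * (Mb$l * ?X$l$j))"
    by (simp add: sum_distrib_right[symmetric] iG2)
  also have "\<dots> = Mb$i * ?X$i$j"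
  proof -
    have "(\<Sum>l\<in>UNIV. (if i = l then 1 else 0) * (Mb$l * ?X$l$j)) = (\<Sum>l\<in>UNIV. if i = l then Mb$l * ?X$l$j else 0)"
      by (rule sum.cong) auto
    then show ?thesis by simp
  qed
  finally have S2: "S = ?X$i$j * Mb$j - Mb$i * ?X$i$j" .
  show ?thesis using S1 S2 by (simp add: algebra_simps)
qed

lemma R2:
  assumes "\<And>k. M$k - b \<noteq> 0" "\<And>j. Mb$j - b \<noteq> 0"
  shows "av E b = (\<chi> j. (Ae E $ j + rho E b) / (Mb$j - b))"
proof -
  have "av E b $ j = (Ae E $ j + rho E b) / (Mb$j - b)" for j
  proof -
    have "av E b $ j = (\<Sum>k\<in>UNIV. c$k * E k / (Mb$j - M$k) / (M$k - b))"
      unfolding av_def AA_def by simp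
    also have "\<dots> = (\<Sum>k\<in>UNIV. (c$k * E k / (Mb$j - M$k) + c$k * E k / (M$k - b)) / (Mb$j - b))"
    proof (rule sum.cong[OF refl])
      fix k
      have "Mb$j - M$k \<noteq> 0" using neq[of j k] by simp
      then show "c$k * E k / (Mb$j - M$k) / (M$k - b) = (c$k * E k / (Mb$j - M$k) + c$k * E k / (M$k - b)) / (Mb$j - b)"
        by (rule r2_scalar) (use assms in auto)
    qed
    also have "\<dots> = (Ae E $ j + rho E b) / (Mb$j - b)"
      by (simp add: Ae_def rho_def AA_def sum_divide_distrib[symmetric] sum.distrib)
    finally show ?thesis .
  qed
  then show ?thesis by (simp add: vec_eq_iff)
qed

lemma struct_rel:
  assumes inv: "invertible (GG E Eb)"
    and ha: "\<And>j. Mb$j - a \<noteq> 0" and hb: "\<And>j. Mb$j - b \<noteq> 0" and hb2: "\<And>k. M$k - b \<noteq> 0"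
  shows "(b - a) * gg E Eb a b = 1 - p1 E Eb a * q1 E Eb b - p2 E Eb a * q2 E Eb b"
proof -
  let ?X = "IG E Eb"
  define w where "w = Ae E + rho E b *s ones"
  have avw: "av E b $ j = w $ j / (Mb$j - b)" for j
    unfolding R2[OF hb2 hb] w_def by (simp add: ones_def)
  have bvs: "bv Eb a $ i = sv Eb $ i / (Mb$i - a)" for i
    unfolding bv_def sv_def by simp
  have "(b - a) * gg E Eb a b = (\<Sum>i\<in>UNIV. \<Sum>j\<in>UNIV. (b - a) * (sv Eb $ i / (Mb$i - a) * ?X$i$j * (w $ j / (Mb$j - b))))"
    unfolding gg_def bil_def bvs avw by (simp add: sum_distrib_left)
  also have "\<dots> = (\<Sum>i\<in>UNIV. \<Sum>j\<in>UNIV. sv Eb $ i * ?X$i$j * av E b $ j - bv Eb a $ i * ?X$i$j * w$j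
      - bv Eb a $ i * ((Mb$i - Mb$j) * ?X$i$j) * av E b $ j)"
    unfolding bvs avw by (intro sum.cong refl r3_scalar ha hb)
  also have "\<dots> = bil (sv Eb) ?X (av E b) - bil (bv Eb a) ?X w
      - (\<Sum>i\<in>UNIV. \<Sum>j\<in>UNIV. bv Eb a $ i * ((Mb$i - Mb$j) * ?X$i$j) * av E b $ j)"
    unfolding bil_def by (simp add: sum_subtractf)
  also have "(\<Sum>i\<in>UNIV. \<Sum>j\<in>UNIV. bv Eb a $ i * ((Mb$i - Mb$j) * ?X$i$j) * av E b $ j)
     = - ((\<Sum>i\<in>UNIV. \<Sum>j\<in>UNIV. (bv Eb a $ i * (\<Sum>k\<in>UNIV. ?X$i$k)) * ((\<Sum>l\<in>UNIV. rt E Eb$l * ?X$l$j) * av E b $ j))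
        + (\<Sum>i\<in>UNIV. \<Sum>j\<in>UNIV. (bv Eb a $ i * (\<Sum>k\<in>UNIV. ?X$i$k * Ae E$k)) * ((\<Sum>l\<in>UNIV. sv Eb$l * ?X$l$j) * av E b $ j)))"
  proof -
    have "(\<Sum>i\<in>UNIV. \<Sum>j\<in>UNIV. bv Eb a $ i * ((Mb$i - Mb$j) * ?X$i$j) * av E b $ j)
      = (\<Sum>i\<in>UNIV. \<Sum>j\<in>UNIV. - ((bv Eb a $ i * (\<Sum>k\<in>UNIV. ?X$i$k)) * ((\<Sum>l\<in>UNIV. rt E Eb$l * ?X$l$j) * av E b $ j)
          + (bv Eb a $ i * (\<Sum>k\<in>UNIV. ?X$i$k * Ae E$k)) * ((\<Sum>l\<in>UNIV. sv Eb$l * ?X$l$j) * av E b $ j)))"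
      unfolding R1[OF inv] by (intro sum.cong refl) (simp add: algebra_simps)
    then show ?thesis by (simp only: sum_negf sum.distrib)
  qed
  also have "\<dots> = - (bil (bv Eb a) ?X ones * bil (rt E Eb) ?X (av E b) + bil (bv Eb a) ?X (Ae E) * bil (sv Eb) ?X (av E b))"
    unfolding sum_sum_prod bil_alt1[of "bv Eb a"] bil_alt2[of _ _ "av E b"] by (simp add: ones_def)
  also have "bil (bv Eb a) ?X w = bil (bv Eb a) ?X (Ae E) + rho E b * bil (bv Eb a) ?X ones"
    unfolding w_def bil_lin ..
  finally show ?thesis
    unfolding p1_def p2_def q1_def q2_def by (simp add: algebra_simps)
qed

end


lemma SG:
  fixes x y p z C D :: real
  assumes "x - z \<noteq> 0" "x + z \<noteq> 0" "y - z \<noteq> 0" "y + z \<noteq> 0" "x - y \<noteq> 0" "p - x \<noteq> 0"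
  shows "C / (p - x) * (D / (x - y)) * (((x - z) / (x + z) - inverse ((x - z) / (x + z))) + ((y + z) / (y - z) - inverse ((y + z) / (y - z))))
    = 2 * z * (C / (p - x) / (x - z) * (D / (y - z)) + C / (p - x) / (x - - z) * (D / (y - - z)))"
  using assms by (simp add: divide_simps) (simp add: algebra_simps)
lemma Sb:
  fixes y z a D :: real
  assumes "y - z \<noteq> 0" "y + z \<noteq> 0" "y - a \<noteq> 0" "z - a \<noteq> 0" "- z - a \<noteq> 0"
  shows "D / (y - a) * ((y + z) / (y - z) - inverse ((y + z) / (y - z)))
     = 2 * z * ((1 / (z - a)) * (D / (y - z) - D / (y - a)) + (1 / (- z - a)) * (D / (y - - z) - D / (y - a)))"
  using assms by (simp add: divide_simps) (simp add: algebra_simps)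
lemma Sa:
  fixes x z b C :: real
  assumes "x - z \<noteq> 0" "x + z \<noteq> 0" "x - b \<noteq> 0" "z - b \<noteq> 0" "- z - b \<noteq> 0"
  shows "C / (x - b) * ((x - z) / (x + z) - inverse ((x - z) / (x + z)))
     = - 2 * z * ((1 / (z - b)) * (C / (x - z) - C / (x - b)) + (1 / (- z - b)) * (C / (x - - z) - C / (x - b)))"
  using assms by (simp add: divide_simps) (simp add: algebra_simps)

lemma bil_diff_left: "bil (v - w) X u = bil v X u - bil w X u"
  unfolding bil_def by (simp add: algebra_simps sum_subtractf)
lemma bil_diff_right: "bil v X (u - w) = bil v X u - bil v X w"
  unfolding bil_def by (simp add: algebra_simps sum_subtractf)

lemma deriv_bil:
  fixes bf af :: "real \<Rightarrow> real^'n::finite" and Xf :: "real \<Rightarrow> real^'n^'n"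
  assumes db: "\<And>i. ((\<lambda>t. bf t $ i) has_real_derivative b' $ i) (at t)"
    and da: "\<And>i. ((\<lambda>t. af t $ i) has_real_derivative a' $ i) (at t)"
    and dX: "\<And>i j. ((\<lambda>t. Xf t $i$j) has_real_derivative X' $i$j) (at t)"
  shows "((\<lambda>t. bil (bf t) (Xf t) (af t)) has_real_derivative
      (bil b' (Xf t) (af t) + bil (bf t) X' (af t) + bil (bf t) (Xf t) a')) (at t)"
proof -
  have e: "((\<lambda>t. bf t$i * Xf t$i$j * af t$j) has_real_derivative
      b'$i * Xf t$i$j * af t$j + bf t$i * X'$i$j * af t$j + bf t$i * Xf t$i$j * a'$j) (at t)" for i j
    using DERIV_mult'[OF DERIV_mult'[OF db dX] da] by (simp add: algebra_simps)
  have "((\<lambda>t. \<Sum>i\<in>UNIV. \<Sum>j\<in>UNIV. bf t$i * Xf t$i$j * af t$j) has_real_derivative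
      (\<Sum>i\<in>UNIV. \<Sum>j\<in>UNIV. b'$i * Xf t$i$j * af t$j + bf t$i * X'$i$j * af t$j + bf t$i * Xf t$i$j * a'$j)) (at t)"
    by (intro DERIV_sum e)
  then show ?thesis unfolding bil_def by (simp add: sum.distrib)
qed

lemma bil_sandwich:
  fixes X :: "real^'n::finite^'n"
  shows "bil b (\<chi> i j. - (\<Sum>k\<in>UNIV. \<Sum>l\<in>UNIV. X$i$k * (outer u1 v1 + outer u2 v2)$k$l * X$l$j)) a
    = - (bil b X u1 * bil v1 X a + bil b X u2 * bil v2 X a)"
proof -
  define w1 where "w1 = (\<lambda>i. \<Sum>k\<in>UNIV. X$i$k * u1$k)"
  define w2 where "w2 = (\<lambda>i. \<Sum>k\<in>UNIV. X$i$k * u2$k)"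
  define z1 where "z1 = (\<lambda>j. \<Sum>l\<in>UNIV. v1$l * X$l$j)"
  define z2 where "z2 = (\<lambda>j. \<Sum>l\<in>UNIV. v2$l * X$l$j)"
  have inner: "(\<Sum>k\<in>UNIV. \<Sum>l\<in>UNIV. X$i$k * (outer u1 v1 + outer u2 v2)$k$l * X$l$j) = w1 i * z1 j + w2 i * z2 j" for i j
  proof -
    have "(\<Sum>k\<in>UNIV. \<Sum>l\<in>UNIV. X$i$k * (outer u1 v1 + outer u2 v2)$k$l * X$l$j)
      = (\<Sum>k\<in>UNIV. \<Sum>l\<in>UNIV. (X$i$k * u1$k) * (v1$l * X$l$j)) + (\<Sum>k\<in>UNIV. \<Sum>l\<in>UNIV. (X$i$k * u2$k) * (v2$l * X$l$j))"
      by (simp add: outer_def algebra_simps sum.distrib)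
    then show ?thesis unfolding sum_sum_prod w1_def w2_def z1_def z2_def .
  qed
  have "bil b (\<chi> i j. - (\<Sum>k\<in>UNIV. \<Sum>l\<in>UNIV. X$i$k * (outer u1 v1 + outer u2 v2)$k$l * X$l$j)) a
     = - ((\<Sum>i\<in>UNIV. \<Sum>j\<in>UNIV. (b$i * w1 i) * (z1 j * a$j)) + (\<Sum>i\<in>UNIV. \<Sum>j\<in>UNIV. (b$i * w2 i) * (z2 j * a$j)))"
  proof -
    have "bil b (\<chi> i j. - (\<Sum>k\<in>UNIV. \<Sum>l\<in>UNIV. X$i$k * (outer u1 v1 + outer u2 v2)$k$l * X$l$j)) a
      = (\<Sum>i\<in>UNIV. \<Sum>j\<in>UNIV. - ((b$i * w1 i) * (z1 j * a$j) + (b$i * w2 i) * (z2 j * a$j)))"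
      unfolding bil_def inner by (intro sum.cong refl) (simp add: algebra_simps)
    then show ?thesis by (simp only: sum_negf sum.distrib)
  qed
  also have "\<dots> = - (bil b X u1 * bil v1 X a + bil b X u2 * bil v2 X a)"
    unfolding sum_sum_prod bil_alt1[of b] bil_alt2[of _ _ a] w1_def w2_def z1_def z2_def ..
  finally show ?thesis .
qed

lemma deriv_det_outer:
  fixes Gf :: "real \<Rightarrow> real^'n::finite^'n"
  assumes der: "\<And>i j. ((\<lambda>s. Gf s$i$j) has_real_derivative (outer u1 v1 + outer u2 v2)$i$j) (at t)"
    and inv: "invertible (Gf t)"
  shows "((\<lambda>s. det (Gf s)) has_real_derivative det (Gf t) * (bil v1 (matrix_inv (Gf t)) u1 + bil v2 (matrix_inv (Gf t)) u2)) (at t)"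
proof -
  let ?D = "outer u1 v1 + outer u2 v2" and ?X = "matrix_inv (Gf t)"
  have "(\<Sum>k\<in>UNIV. det (\<chi> i. if i = k then ?D$i else Gf t$i))
      = (\<Sum>k\<in>UNIV. (\<Sum>l\<in>UNIV. ?D$k$l * ?X$l$k) * det (Gf t))"
  proof (rule sum.cong[OF refl])
    fix k
    have "(\<chi> i. if i = k then ?D$i else Gf t$i) = (\<chi> i. if i = k then ?D$k else Gf t$i)"
      by (simp add: vec_eq_iff)
    then show "det (\<chi> i. if i = k then ?D$i else Gf t$i) = (\<Sum>l\<in>UNIV. ?D$k$l * ?X$l$k) * det (Gf t)"
      using det_row_replace[OF inv, of k "?D$k"] by simp
  qed
  also have "\<dots> = det (Gf t) * (\<Sum>k\<in>UNIV. \<Sum>l\<in>UNIV. v1$l * ?X$l$k * u1$k + v2$l * ?X$l$k * u2$k)"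
    by (simp add: sum_distrib_left sum_distrib_right outer_def algebra_simps)
  also have "(\<Sum>k\<in>UNIV. \<Sum>l\<in>UNIV. v1$l * ?X$l$k * u1$k + v2$l * ?X$l$k * u2$k)
      = (\<Sum>l\<in>UNIV. \<Sum>k\<in>UNIV. v1$l * ?X$l$k * u1$k + v2$l * ?X$l$k * u2$k)" by (rule sum.swap)
  also have "\<dots> = bil v1 ?X u1 + bil v2 ?X u2" unfolding bil_def by (simp add: sum.distrib)
  finally show ?thesis using deriv_det[OF der] by simp
qed

lemma sum_lin2: "(\<Sum>k\<in>A. r * (a k * d1 + b k * d2)) = r * ((\<Sum>k\<in>A. a k) * d1 + (\<Sum>k\<in>A. b k) * (d2::real))"
  by (simp add: sum_distrib_left sum_distrib_right sum.distrib algebra_simps)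

context toda
begin

definition Ef :: "real \<Rightarrow> ('n \<Rightarrow> real) \<Rightarrow> real \<Rightarrow> 'n \<Rightarrow> real" where
  "Ef z E0 t = (\<lambda>k. E0 k * exp (t * Ld M z k))"
definition Ebf :: "real \<Rightarrow> ('n \<Rightarrow> real) \<Rightarrow> real \<Rightarrow> 'n \<Rightarrow> real" where
  "Ebf z Eb0 t = (\<lambda>k. Eb0 k * exp (t * Lbd Mb z k))"

definition zok :: "real \<Rightarrow> bool" where
  "zok z \<longleftrightarrow> (\<forall>k. M$k - z \<noteq> 0 \<and> M$k + z \<noteq> 0 \<and> Mb$k - z \<noteq> 0 \<and> Mb$k + z \<noteq> 0)"

lemma flowG:
  assumes z: "zok z"
  shows "((\<lambda>t. GG (Ef z E0 t) (Ebf z Eb0 t) $i$j) has_real_derivative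
    (outer (av (Ef z E0 t) z) ((2*z) *s bv (Ebf z Eb0 t) z) + outer (av (Ef z E0 t) (-z)) ((2*z) *s bv (Ebf z Eb0 t) (-z)))$i$j) (at t)"
proof -
  define K where "K = (\<lambda>k. c$k * E0 k / (Mb$i - M$k) * (cb$j * Eb0 j / (M$k - Mb$j)))"
  define W where "W = (\<lambda>k. Ld M z k + Lbd Mb z j)"
  have eq: "GG (Ef z E0 s) (Ebf z Eb0 s) $i$j = (if i = j then 1 else 0) + (\<Sum>k\<in>UNIV. K k * exp (s * W k))" for s
  proof -
    have "c$k * (E0 k * exp (s * Ld M z k)) / (Mb$i - M$k) * (cb$j * (Eb0 j * exp (s * Lbd Mb z j)) / (M$k - Mb$j))
        = K k * exp (s * W k)" for k
      unfolding K_def W_def by (simp add: distrib_left exp_add)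
    then show ?thesis unfolding GG_entry by (simp add: AA_def BB_def Ef_def Ebf_def)
  qed
  have d: "((\<lambda>s. (if i = j then 1 else 0) + (\<Sum>k\<in>UNIV. K k * exp (s * W k))) has_real_derivative
        (\<Sum>k\<in>UNIV. K k * (exp (t * W k) * W k))) (at t)"
    by (auto intro!: derivative_eq_intros DERIV_sum simp: mult_ac)
  have val: "(\<Sum>k\<in>UNIV. K k * (exp (t * W k) * W k)) =
    (outer (av (Ef z E0 t) z) ((2*z) *s bv (Ebf z Eb0 t) z) + outer (av (Ef z E0 t) (-z)) ((2*z) *s bv (Ebf z Eb0 t) (-z)))$i$j"
  proof -
    define D where "D = cb$j * Ebf z Eb0 t j"
    have "K k * (exp (t * W k) * W k) = 2 * z * (c$k * Ef z E0 t k / (Mb$i - M$k) / (M$k - z) * (D / (Mb$j - z))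
        + c$k * Ef z E0 t k / (Mb$i - M$k) / (M$k - - z) * (D / (Mb$j - - z)))" for k
    proof -
      have h: "M$k - z \<noteq> 0" "M$k + z \<noteq> 0" "Mb$j - z \<noteq> 0" "Mb$j + z \<noteq> 0" using z unfolding zok_def by auto
      have h2: "M$k - Mb$j \<noteq> 0" "Mb$i - M$k \<noteq> 0" using neq[of j k] neq[of i k] by auto
      have "K k * (exp (t * W k) * W k) = c$k * Ef z E0 t k / (Mb$i - M$k) * (D / (M$k - Mb$j)) * W k"
        unfolding K_def W_def D_def Ef_def Ebf_def by (simp add: distrib_left exp_add mult_ac add_divide_distrib)
      also have "\<dots> = 2 * z * (c$k * Ef z E0 t k / (Mb$i - M$k) / (M$k - z) * (D / (Mb$j - z))
        + c$k * Ef z E0 t k / (Mb$i - M$k) / (M$k - - z) * (D / (Mb$j - - z)))"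
        unfolding W_def Ld_def Lbd_def Hd_def Hbd_def by (rule SG[OF h h2])
      finally show ?thesis .
    qed
    then have "(\<Sum>k\<in>UNIV. K k * (exp (t * W k) * W k)) =
      (\<Sum>k\<in>UNIV. 2 * z * ((c$k * Ef z E0 t k / (Mb$i - M$k) / (M$k - z)) * (D / (Mb$j - z))
        + (c$k * Ef z E0 t k / (Mb$i - M$k) / (M$k - - z)) * (D / (Mb$j - - z))))"
      by (intro sum.cong refl)
    also have "\<dots> = 2 * z * ((\<Sum>k\<in>UNIV. c$k * Ef z E0 t k / (Mb$i - M$k) / (M$k - z)) * (D / (Mb$j - z))
        + (\<Sum>k\<in>UNIV. c$k * Ef z E0 t k / (Mb$i - M$k) / (M$k - - z)) * (D / (Mb$j - - z)))"
      by (rule sum_lin2)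
    also have "\<dots> = (outer (av (Ef z E0 t) z) ((2*z) *s bv (Ebf z Eb0 t) z) + outer (av (Ef z E0 t) (-z)) ((2*z) *s bv (Ebf z Eb0 t) (-z)))$i$j"
      unfolding outer_def av_def bv_def AA_def D_def vec_lambda_beta vector_add_component vector_smult_component
      by (simp only: algebra_simps)
    finally show ?thesis .
  qed
  show ?thesis unfolding eq using d val by simp
qed

end


lemma sum_lin3: "(\<Sum>k\<in>A. (r::real) * (e1 * (p k - q k) + e2 * (s k - q k)))
   = r * (e1 * ((\<Sum>k\<in>A. p k) - (\<Sum>k\<in>A. q k)) + e2 * ((\<Sum>k\<in>A. s k) - (\<Sum>k\<in>A. q k)))"
  by (simp add: sum_distrib_left sum_subtractf sum.distrib algebra_simps)

context toda
begin

lemma flow_det: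
  assumes z: "zok z" and inv: "invertible (GG (Ef z E0 t) (Ebf z Eb0 t))"
  shows "((\<lambda>s. det (GG (Ef z E0 s) (Ebf z Eb0 s))) has_real_derivative
     det (GG (Ef z E0 t) (Ebf z Eb0 t)) * (2*z*gg (Ef z E0 t) (Ebf z Eb0 t) z z + 2*z*gg (Ef z E0 t) (Ebf z Eb0 t) (-z) (-z))) (at t)"
  using deriv_det_outer[OF flowG[OF z] inv] unfolding gg_def IG_def bil_scale_left .

lemma flow_gg:
  assumes z: "zok z" and inv: "\<And>s. invertible (GG (Ef z E0 s) (Ebf z Eb0 s))"
    and ha: "\<And>j. Mb$j - a \<noteq> 0" "z - a \<noteq> 0" "- z - a \<noteq> 0"
    and hb: "\<And>k. M$k - b \<noteq> 0" "z - b \<noteq> 0" "- z - b \<noteq> 0"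
  shows "((\<lambda>s. gg (Ef z E0 s) (Ebf z Eb0 s) a b) has_real_derivative
     2*z*((1/(z-a))*(gg (Ef z E0 t) (Ebf z Eb0 t) z b - gg (Ef z E0 t) (Ebf z Eb0 t) a b)
          + (1/(-z-a))*(gg (Ef z E0 t) (Ebf z Eb0 t) (-z) b - gg (Ef z E0 t) (Ebf z Eb0 t) a b))
     + - (gg (Ef z E0 t) (Ebf z Eb0 t) a z * (2*z*gg (Ef z E0 t) (Ebf z Eb0 t) z b)
          + gg (Ef z E0 t) (Ebf z Eb0 t) a (-z) * (2*z*gg (Ef z E0 t) (Ebf z Eb0 t) (-z) b))
     + (-2*z)*((1/(z-b))*(gg (Ef z E0 t) (Ebf z Eb0 t) a z - gg (Ef z E0 t) (Ebf z Eb0 t) a b)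
          + (1/(-z-b))*(gg (Ef z E0 t) (Ebf z Eb0 t) a (-z) - gg (Ef z E0 t) (Ebf z Eb0 t) a b))) (at t)"
proof -
  let ?E = "Ef z E0 t" and ?Eb = "Ebf z Eb0 t"
  let ?G' = "outer (av ?E z) ((2*z) *s bv ?Eb z) + outer (av ?E (-z)) ((2*z) *s bv ?Eb (-z))"
  define b' where "b' = (2*z) *s ((1/(z-a)) *s (bv ?Eb z - bv ?Eb a) + (1/(-z-a)) *s (bv ?Eb (-z) - bv ?Eb a))"
  define a' where "a' = (-2*z) *s ((1/(z-b)) *s (av ?E z - av ?E b) + (1/(-z-b)) *s (av ?E (-z) - av ?E b))"
  define X' where "X' = (\<chi> i j. - (\<Sum>k\<in>UNIV. \<Sum>l\<in>UNIV. IG ?E ?Eb$i$k * ?G'$k$l * IG ?E ?Eb$l$j))"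
  have hz: "\<And>k. M$k - z \<noteq> 0" "\<And>k. M$k + z \<noteq> 0" "\<And>k. Mb$k - z \<noteq> 0" "\<And>k. Mb$k + z \<noteq> 0"
    using z unfolding zok_def by auto
  have db: "((\<lambda>s. bv (Ebf z Eb0 s) a $ j) has_real_derivative b'$j) (at t)" for j
  proof -
    have d: "((\<lambda>s. cb$j * (Eb0 j * exp (s * Lbd Mb z j)) / (Mb$j - a)) has_real_derivative
        cb$j * (Eb0 j * (exp (t * Lbd Mb z j) * Lbd Mb z j)) / (Mb$j - a)) (at t)"
      using ha(1)[of j] by (auto intro!: derivative_eq_intros)
    have "cb$j * (Eb0 j * (exp (t * Lbd Mb z j) * Lbd Mb z j)) / (Mb$j - a)
        = (cb$j * ?Eb j) / (Mb$j - a) * Lbd Mb z j" by (simp add: Ebf_def)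
    also have "\<dots> = 2 * z * ((1 / (z - a)) * (cb$j * ?Eb j / (Mb$j - z) - cb$j * ?Eb j / (Mb$j - a))
         + (1 / (- z - a)) * (cb$j * ?Eb j / (Mb$j - - z) - cb$j * ?Eb j / (Mb$j - a)))"
      unfolding Lbd_def Hbd_def by (rule Sb[OF hz(3) hz(4) ha(1) ha(2) ha(3)])
    also have "\<dots> = b'$j" unfolding b'_def bv_def vec_lambda_beta vector_add_component vector_smult_component vector_minus_component ..
    finally show ?thesis using d unfolding bv_def Ebf_def by simp
  qed
  have da: "((\<lambda>s. av (Ef z E0 s) b $ i) has_real_derivative a'$i) (at t)" for i
  proof -
    have d: "((\<lambda>s. \<Sum>k\<in>UNIV. c$k * (E0 k * exp (s * Ld M z k)) / (Mb$i - M$k) / (M$k - b)) has_real_derivative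
        (\<Sum>k\<in>UNIV. c$k * (E0 k * (exp (t * Ld M z k) * Ld M z k)) / (Mb$i - M$k) / (M$k - b))) (at t)"
      using hb(1) neq by (auto intro!: derivative_eq_intros DERIV_sum)
    have "(\<Sum>k\<in>UNIV. c$k * (E0 k * (exp (t * Ld M z k) * Ld M z k)) / (Mb$i - M$k) / (M$k - b))
      = (\<Sum>k\<in>UNIV. - 2 * z * ((1/(z - b)) * (c$k * ?E k / (Mb$i - M$k) / (M$k - z) - c$k * ?E k / (Mb$i - M$k) / (M$k - b))
          + (1/(- z - b)) * (c$k * ?E k / (Mb$i - M$k) / (M$k - - z) - c$k * ?E k / (Mb$i - M$k) / (M$k - b))))"
    proof (rule sum.cong[OF refl])
      fix k
      have "c$k * (E0 k * (exp (t * Ld M z k) * Ld M z k)) / (Mb$i - M$k) / (M$k - b)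
          = (c$k * ?E k / (Mb$i - M$k)) / (M$k - b) * Ld M z k" by (simp add: Ef_def)
      also have "\<dots> = - 2 * z * ((1/(z - b)) * (c$k * ?E k / (Mb$i - M$k) / (M$k - z) - c$k * ?E k / (Mb$i - M$k) / (M$k - b))
          + (1/(- z - b)) * (c$k * ?E k / (Mb$i - M$k) / (M$k - - z) - c$k * ?E k / (Mb$i - M$k) / (M$k - b)))"
        unfolding Ld_def Hd_def by (rule Sa[OF hz(1) hz(2) hb(1) hb(2) hb(3)])
      finally show "c$k * (E0 k * (exp (t * Ld M z k) * Ld M z k)) / (Mb$i - M$k) / (M$k - b)
        = - 2 * z * ((1/(z - b)) * (c$k * ?E k / (Mb$i - M$k) / (M$k - z) - c$k * ?E k / (Mb$i - M$k) / (M$k - b))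
          + (1/(- z - b)) * (c$k * ?E k / (Mb$i - M$k) / (M$k - - z) - c$k * ?E k / (Mb$i - M$k) / (M$k - b)))"
        by simp
    qed
    also have "\<dots> = a'$i"
      unfolding sum_lin3 a'_def av_def AA_def vec_lambda_beta vector_add_component vector_smult_component vector_minus_component
      by (simp only: mult_minus_left)
    finally show ?thesis using d unfolding av_def AA_def Ef_def by simp
  qed
  have dX: "((\<lambda>s. IG (Ef z E0 s) (Ebf z Eb0 s) $i$j) has_real_derivative X'$i$j) (at t)" for i j
    unfolding IG_def X'_def vec_lambda_beta by (rule deriv_inv[OF inv flowG[OF z]])
  have main: "((\<lambda>s. gg (Ef z E0 s) (Ebf z Eb0 s) a b) has_real_derivative
     bil b' (IG ?E ?Eb) (av ?E b) + bil (bv ?Eb a) X' (av ?E b) + bil (bv ?Eb a) (IG ?E ?Eb) a') (at t)"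
    unfolding gg_def by (rule deriv_bil[OF db da dX])
  have e1: "bil (bv ?Eb a) X' (av ?E b) = - (gg ?E ?Eb a z * (2*z*gg ?E ?Eb z b) + gg ?E ?Eb a (-z) * (2*z*gg ?E ?Eb (-z) b))"
    unfolding X'_def bil_sandwich gg_def bil_scale_left ..
  show ?thesis using main unfolding e1 unfolding b'_def a'_def bil_lin bil_diff_left bil_diff_right gg_def[symmetric] .
qed

end


definition Tf :: "(real \<Rightarrow> real \<Rightarrow> real) \<Rightarrow> real \<Rightarrow> real \<Rightarrow> real" where
  "Tf g z1 z2 = (1 + 2*z1*g z1 (-z1)) * (1 + 2*z2*((2*z1/(z1-z2))*((-2*z1/(z2-z1))*g z1 (-z1) + ((z1+z2)/(z2-z1))*g z1 (-z2))
           + ((z1+z2)/(z2-z1))*((-2*z1/(z2-z1))*g z2 (-z1) + ((z1+z2)/(z2-z1))*g z2 (-z2))))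
       - (2*z1*((-2*z1/(z2-z1))*g z1 (-z1) + ((z1+z2)/(z2-z1))*g z1 (-z2))) * (2*z2*((2*z1/(z1-z2))*g z1 (-z1) + ((z1+z2)/(z2-z1))*g z2 (-z1)))"

definition DGf :: "(real \<Rightarrow> real \<Rightarrow> real) \<Rightarrow> real \<Rightarrow> real \<Rightarrow> real" where
  "DGf g z a = 2*z*((1/(z-a))*(g z a - g a a) + (1/(-z-a))*(g (-z) a - g a a))
     + - (g a z * (2*z*g z a) + g a (-z) * (2*z*g (-z) a))
     + (-2*z)*((1/(z-a))*(g a z - g a a) + (1/(-z-a))*(g a (-z) - g a a))"

lemma Tf_X:
  fixes g X :: "real \<Rightarrow> real \<Rightarrow> real"
  assumes nz: "z1 \<noteq> 0" "z2 \<noteq> 0" "z1 + z2 \<noteq> 0" "z1 - z2 \<noteq> 0"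
    and h: "(-z1-z1)*g z1 (-z1) = 1 - X z1 (-z1)" "(-z2-z1)*g z1 (-z2) = 1 - X z1 (-z2)"
      "(-z1-z2)*g z2 (-z1) = 1 - X z2 (-z1)" "(-z2-z2)*g z2 (-z2) = 1 - X z2 (-z2)"
  shows "Tf g z1 z2 = ((z1+z2)^2 * X z1 (-z1) * X z2 (-z2) - 4*z1*z2 * X z1 (-z2) * X z2 (-z1)) / (z1-z2)^2"
proof -
  have nz2: "z2 - z1 \<noteq> 0" "-z1-z2 \<noteq> 0" "-z2-z1 \<noteq> 0" "-z1-z1 \<noteq> 0" "-z2-z2 \<noteq> 0" using nz by auto
  have e: "g z1 (-z1) = (1 - X z1 (-z1))/(-z1-z1)" "g z1 (-z2) = (1 - X z1 (-z2))/(-z2-z1)"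
     "g z2 (-z1) = (1 - X z2 (-z1))/(-z1-z2)" "g z2 (-z2) = (1 - X z2 (-z2))/(-z2-z2)"
    using h nz2 by (auto simp: field_simps)
  show ?thesis unfolding Tf_def e using nz nz2 by (simp add: divide_simps power2_eq_square) (simp add: algebra_simps)
qed

lemma DGf_X:
  fixes g X :: "real \<Rightarrow> real \<Rightarrow> real"
  assumes nz: "z - a \<noteq> 0" "- z - a \<noteq> 0"
    and h: "(a - z)*g z a = 1 - X z a" "(z - a)*g a z = 1 - X a z"
      "(a - - z)*g (-z) a = 1 - X (-z) a" "(- z - a)*g a (-z) = 1 - X a (-z)"
  shows "DGf g z a = 2*z*((X z a * X a z - 1)/(z-a)^2 + (X (-z) a * X a (-z) - 1)/(-z-a)^2)"
proof -
  have nz2: "a - z \<noteq> 0" "a - - z \<noteq> 0" using nz by auto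
  have e: "g z a = (1 - X z a)/(a - z)" "g a z = (1 - X a z)/(z - a)"
     "g (-z) a = (1 - X (-z) a)/(a - - z)" "g a (-z) = (1 - X a (-z))/(- z - a)"
    using h nz nz2 by (auto simp: field_simps)
  show ?thesis unfolding DGf_def e using nz nz2 by (simp add: divide_simps power2_eq_square) (simp add: algebra_simps)
qed

lemma XI:
  fixes pa1 pa2 pb1 pb2 pc1 pc2 pd1 pd2 qa1 qa2 qb1 qb2 qc1 qc2 qd1 qd2 :: real
  assumes "pa1*qa1+pa2*qa2 = 1" "pb1*qb1+pb2*qb2 = 1" "pc1*qc1+pc2*qc2 = 1" "pd1*qd1+pd2*qd2 = 1"
  shows "(pa1*qc1+pa2*qc2)*(pc1*qa1+pc2*qa2) + (pb1*qd1+pb2*qd2)*(pd1*qb1+pd2*qb2)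
       + (pa1*qd1+pa2*qd2)*(pd1*qa1+pd2*qa2) + (pb1*qc1+pb2*qc2)*(pc1*qb1+pc2*qb2) - 2 =
     (pa1*qb1+pa2*qb2)*(pd1*qc1+pd2*qc2)*(pb1*qd1+pb2*qd2)*(pc1*qa1+pc2*qa2)
     + (pa1*qc1+pa2*qc2)*(pd1*qb1+pd2*qb2)*(pb1*qa1+pb2*qa2)*(pc1*qd1+pc2*qd2)
     + (pa1*qb1+pa2*qb2)*(pc1*qd1+pc2*qd2)*(pb1*qc1+pb2*qc2)*(pd1*qa1+pd2*qa2)
     + (pa1*qd1+pa2*qd2)*(pc1*qb1+pc2*qb2)*(pb1*qa1+pb2*qa2)*(pd1*qc1+pd2*qc2)
     - 2*(pa1*qb1+pa2*qb2)*(pb1*qa1+pb2*qa2)*(pc1*qd1+pc2*qd2)*(pd1*qc1+pd2*qc2)"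
  using assms by algebra

lemma XII:
  fixes pa1 pa2 pb1 pb2 pc1 pc2 pd1 pd2 qa1 qa2 qb1 qb2 qc1 qc2 qd1 qd2 :: real
  assumes "pa1*qa1+pa2*qa2 = 1" "pb1*qb1+pb2*qb2 = 1" "pc1*qc1+pc2*qc2 = 1" "pd1*qd1+pd2*qd2 = 1"
  shows "((pa1*qc1+pa2*qc2)*(pc1*qa1+pc2*qa2) + (pb1*qd1+pb2*qd2)*(pd1*qb1+pd2*qb2))
       - ((pa1*qd1+pa2*qd2)*(pd1*qa1+pd2*qa2) + (pb1*qc1+pb2*qc2)*(pc1*qb1+pc2*qb2)) =
     ((pa1*qb1+pa2*qb2)*(pc1*qd1+pc2*qd2)*(pb1*qc1+pb2*qc2)*(pd1*qa1+pd2*qa2)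
      + (pa1*qd1+pa2*qd2)*(pc1*qb1+pc2*qb2)*(pb1*qa1+pb2*qa2)*(pd1*qc1+pd2*qc2))
     - ((pa1*qb1+pa2*qb2)*(pd1*qc1+pd2*qc2)*(pb1*qd1+pb2*qd2)*(pc1*qa1+pc2*qa2)
      + (pa1*qc1+pa2*qc2)*(pd1*qb1+pd2*qb2)*(pb1*qa1+pb2*qa2)*(pc1*qd1+pc2*qd2))
     + 2*((pa1*qc1+pa2*qc2)*(pd1*qb1+pd2*qb2)*(pb1*qd1+pb2*qd2)*(pc1*qa1+pc2*qa2)
      - (pa1*qd1+pa2*qd2)*(pc1*qb1+pc2*qb2)*(pb1*qc1+pb2*qc2)*(pd1*qa1+pd2*qa2))"
  using assms by algebra

lemma key:
  fixes la mu Xab Xba Xac Xca Xad Xda Xbc Xcb Xbd Xdb Xcd Xdc :: real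
  assumes I: "Xac*Xca + Xbd*Xdb + Xad*Xda + Xbc*Xcb - 2 =
     Xab*Xdc*Xbd*Xca + Xac*Xdb*Xba*Xcd + Xab*Xcd*Xbc*Xda + Xad*Xcb*Xba*Xdc - 2*Xab*Xba*Xcd*Xdc"
    and II: "(Xac*Xca + Xbd*Xdb) - (Xad*Xda + Xbc*Xcb) =
      (Xab*Xcd*Xbc*Xda + Xad*Xcb*Xba*Xdc) - (Xab*Xdc*Xbd*Xca + Xac*Xdb*Xba*Xcd) + 2*(Xac*Xdb*Xbd*Xca - Xad*Xcb*Xbc*Xda)"
  shows "-8*la*mu*(la^2+mu^2) + 4*la*mu*((la+mu)^2*(Xac*Xca + Xbd*Xdb) + (la-mu)^2*(Xbc*Xcb + Xad*Xda))
    = ((la-mu)^2*Xab*Xdc + 4*la*mu*Xac*Xdb) * ((mu-la)^2*Xba*Xcd + 4*la*mu*Xbd*Xca)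
      - ((la+mu)^2*Xab*Xcd - 4*la*mu*Xad*Xcb) * ((la+mu)^2*Xba*Xdc - 4*la*mu*Xbc*Xda)"
  using I II by algebra

lemma lhs_form:
  fixes la mu P1 P2 P3 P4 :: real
  assumes la: "la \<noteq> 0" and mu: "mu \<noteq> 0" and lm1: "la - mu \<noteq> 0" and lm2: "la + mu \<noteq> 0"
  shows "8 * (la * mu * (la^2 + mu^2) / (la^2 - mu^2)^2) + 2 * mu * (2 * la * ((P1 - 1)/(la-mu)^2 + (P2 - 1)/(-la-mu)^2))
     + 2 * mu * (2 * la * ((P3 - 1)/(la- -mu)^2 + (P4 - 1)/(-la- -mu)^2))
    = (-8*la*mu*(la^2+mu^2) + 4*la*mu*((la+mu)^2*(P1 + P4) + (la-mu)^2*(P2 + P3))) / (la^2 - mu^2)^2"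
proof -
  have e1: "(la^2 - mu^2)^2 = (la-mu)^2 * (la+mu)^2" by (simp add: power2_eq_square algebra_simps)
  have e2: "(-la-mu)^2 = (la+mu)^2" "(la - -mu)^2 = (la+mu)^2" "(-la- -mu)^2 = (la-mu)^2" by (simp_all add: power2_eq_square algebra_simps)
  show ?thesis unfolding e1 e2 using lm1 lm2 by (simp add: divide_simps) (simp add: algebra_simps power2_eq_square)
qed

lemma rhs_form:
  fixes la mu N1 N2 N3 N4 :: real
  assumes lm1: "la - mu \<noteq> 0" and lm2: "la + mu \<noteq> 0"
  shows "((la+mu)/(la-mu))^2 * (N1/(la+mu)^2) * (N2/(la+mu)^2) - (1/((la+mu)/(la-mu))^2) * (N3/(la-mu)^2) * (N4/(la-mu)^2)
    = (N1*N2 - N3*N4) / (la^2 - mu^2)^2"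
proof -
  have e1: "(la^2 - mu^2)^2 = (la-mu)^2 * (la+mu)^2" by (simp add: power2_eq_square algebra_simps)
  show ?thesis unfolding e1 using lm1 lm2 by (simp add: divide_simps)
qed

lemma final_alg:
  fixes g :: "real \<Rightarrow> real \<Rightarrow> real" and p1 p2 q1 q2 :: "real \<Rightarrow> real"
  assumes la: "la \<noteq> 0" and mu: "mu \<noteq> 0" and lm: "la^2 \<noteq> mu^2"
    and hyp: "\<And>a b. a \<in> {la, -la, mu, -mu} \<Longrightarrow> b \<in> {la, -la, mu, -mu} \<Longrightarrow>
        (b - a) * g a b = 1 - p1 a * q1 b - p2 a * q2 b"
  shows "8 * (la * mu * (la^2 + mu^2) / (la^2 - mu^2)^2) + 2 * mu * DGf g la mu + 2 * mu * DGf g la (-mu)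
    = ((la+mu)/(la-mu))^2 * Tf g la (-mu) * Tf g (-la) mu - (1/((la+mu)/(la-mu))^2) * Tf g la mu * Tf g (-la) (-mu)"
proof -
  define X where "X = (\<lambda>a b. p1 a * q1 b + p2 a * q2 b)"
  have h: "(b - a) * g a b = 1 - X a b" if "a \<in> {la, -la, mu, -mu}" "b \<in> {la, -la, mu, -mu}" for a b
    using hyp[OF that] unfolding X_def by simp
  have lm1: "la - mu \<noteq> 0"
  proof
    assume "la - mu = 0" then have "la = mu" by simp
    then show False using lm by simp
  qed
  have lm2: "la + mu \<noteq> 0"
  proof
    assume "la + mu = 0" then have "la = - mu" by simp
    then show False using lm by simp
  qed
  have lm3: "-la - mu \<noteq> 0" "mu - la \<noteq> 0" "- mu - la \<noteq> 0" "-la + mu \<noteq> 0" using lm1 lm2 by auto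
  have diag: "p1 a * q1 a + p2 a * q2 a = 1" if "a \<in> {la, -la, mu, -mu}" for a
    using h[OF that that] unfolding X_def by simp
  have m: "la \<in> {la, -la, mu, -mu}" "-la \<in> {la, -la, mu, -mu}" "mu \<in> {la, -la, mu, -mu}" "-mu \<in> {la, -la, mu, -mu}"
    "- (-la) \<in> {la, -la, mu, -mu}" "- (-mu) \<in> {la, -la, mu, -mu}" by auto
  note hh = h[OF m(1) m(1)] h[OF m(1) m(2)] h[OF m(1) m(3)] h[OF m(1) m(4)] h[OF m(1) m(6)]
    h[OF m(2) m(1)] h[OF m(2) m(2)] h[OF m(2) m(3)] h[OF m(2) m(4)] h[OF m(2) m(5)] h[OF m(2) m(6)]
    h[OF m(3) m(1)] h[OF m(3) m(2)] h[OF m(3) m(3)] h[OF m(3) m(4)] h[OF m(3) m(5)]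
    h[OF m(4) m(1)] h[OF m(4) m(2)] h[OF m(4) m(3)] h[OF m(4) m(4)] h[OF m(4) m(5)] h[OF m(4) m(6)]
  have T1: "Tf g la (-mu) = ((la + -mu)^2 * X la (-la) * X (-mu) (- (-mu)) - 4*la*(-mu) * X la (- (-mu)) * X (-mu) (-la)) / (la - -mu)^2"
    by (rule Tf_X) (use la mu lm1 lm2 hh in simp_all)
  have T2: "Tf g (-la) mu = ((-la + mu)^2 * X (-la) (- (-la)) * X mu (-mu) - 4*(-la)*mu * X (-la) (-mu) * X mu (- (-la))) / (-la - mu)^2"
    by (rule Tf_X) (use la mu lm1 lm2 lm3 hh in simp_all)
  have T3: "Tf g la mu = ((la + mu)^2 * X la (-la) * X mu (-mu) - 4*la*mu * X la (-mu) * X mu (-la)) / (la - mu)^2"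
    by (rule Tf_X) (use la mu lm1 lm2 lm3 hh in simp_all)
  have T4: "Tf g (-la) (-mu) = ((-la + -mu)^2 * X (-la) (- (-la)) * X (-mu) (- (-mu)) - 4*(-la)*(-mu) * X (-la) (- (-mu)) * X (-mu) (- (-la))) / (-la - -mu)^2"
    by (rule Tf_X) (use la mu lm1 lm2 lm3 hh in simp_all)
  have D1: "DGf g la mu = 2*la*((X la mu * X mu la - 1)/(la-mu)^2 + (X (-la) mu * X mu (-la) - 1)/(-la-mu)^2)"
    by (rule DGf_X) (use la mu lm1 lm2 lm3 hh in simp_all)
  have D2: "DGf g la (-mu) = 2*la*((X la (-mu) * X (-mu) la - 1)/(la- -mu)^2 + (X (-la) (-mu) * X (-mu) (-la) - 1)/(-la- -mu)^2)"
    by (rule DGf_X) (use la mu lm1 lm2 lm3 hh in simp_all)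
  have T1': "Tf g la (-mu) = ((la-mu)^2*X la (-la)*X (-mu) mu + 4*la*mu*X la mu*X (-mu) (-la)) / (la+mu)^2"
    unfolding T1 by (simp add: algebra_simps)
  have T2': "Tf g (-la) mu = ((mu-la)^2*X (-la) la*X mu (-mu) + 4*la*mu*X (-la) (-mu)*X mu la) / (la+mu)^2"
  proof -
    have "(-la - mu)^2 = (la+mu)^2" by (simp add: power2_eq_square algebra_simps)
    then show ?thesis unfolding T2 by (simp add: algebra_simps)
  qed
  have T3': "Tf g la mu = ((la+mu)^2*X la (-la)*X mu (-mu) - 4*la*mu*X la (-mu)*X mu (-la)) / (la-mu)^2"
    unfolding T3 by (simp add: algebra_simps)
  have T4': "Tf g (-la) (-mu) = ((la+mu)^2*X (-la) la*X (-mu) mu - 4*la*mu*X (-la) mu*X (-mu) la) / (la-mu)^2"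
  proof -
    have "(-la + -mu)^2 = (la+mu)^2" "(-la - -mu)^2 = (la-mu)^2" by (simp_all add: power2_eq_square algebra_simps)
    then show ?thesis unfolding T4 by (simp add: algebra_simps)
  qed
  have L: "8 * (la * mu * (la^2 + mu^2) / (la^2 - mu^2)^2) + 2 * mu * DGf g la mu + 2 * mu * DGf g la (-mu)
     = (-8*la*mu*(la^2+mu^2) + 4*la*mu*((la+mu)^2*(X la mu * X mu la + X (-la) (-mu) * X (-mu) (-la))
        + (la-mu)^2*(X (-la) mu * X mu (-la) + X la (-mu) * X (-mu) la))) / (la^2 - mu^2)^2"
    unfolding D1 D2 by (rule lhs_form[OF la mu lm1 lm2])
  have R: "((la+mu)/(la-mu))^2 * Tf g la (-mu) * Tf g (-la) mu - (1/((la+mu)/(la-mu))^2) * Tf g la mu * Tf g (-la) (-mu)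
     = (((la-mu)^2*X la (-la)*X (-mu) mu + 4*la*mu*X la mu*X (-mu) (-la)) * ((mu-la)^2*X (-la) la*X mu (-mu) + 4*la*mu*X (-la) (-mu)*X mu la)
       - ((la+mu)^2*X la (-la)*X mu (-mu) - 4*la*mu*X la (-mu)*X mu (-la)) * ((la+mu)^2*X (-la) la*X (-mu) mu - 4*la*mu*X (-la) mu*X (-mu) la))
       / (la^2 - mu^2)^2"
    unfolding T1' T2' T3' T4' by (rule rhs_form[OF lm1 lm2])
  have dg: "p1 a * q1 a + p2 a * q2 a = 1" if "a \<in> {la, -la, mu, -mu}" for a using diag[OF that] .
  have I: "X la mu * X mu la + X (-la) (-mu) * X (-mu) (-la) + X la (-mu) * X (-mu) la + X (-la) mu * X mu (-la) - 2 =
     X la (-la) * X (-mu) mu * X (-la) (-mu) * X mu la + X la mu * X (-mu) (-la) * X (-la) la * X mu (-mu)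
     + X la (-la) * X mu (-mu) * X (-la) mu * X (-mu) la + X la (-mu) * X mu (-la) * X (-la) la * X (-mu) mu
     - 2 * X la (-la) * X (-la) la * X mu (-mu) * X (-mu) mu"
    unfolding X_def by (rule XI) (use dg m in auto)
  have II: "(X la mu * X mu la + X (-la) (-mu) * X (-mu) (-la)) - (X la (-mu) * X (-mu) la + X (-la) mu * X mu (-la)) =
      (X la (-la) * X mu (-mu) * X (-la) mu * X (-mu) la + X la (-mu) * X mu (-la) * X (-la) la * X (-mu) mu)
      - (X la (-la) * X (-mu) mu * X (-la) (-mu) * X mu la + X la mu * X (-mu) (-la) * X (-la) la * X mu (-mu))
      + 2 * (X la mu * X (-mu) (-la) * X (-la) (-mu) * X mu la - X la (-mu) * X mu (-la) * X (-la) mu * X (-mu) la)"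
    unfolding X_def by (rule XII) (use dg m in auto)
  have K: "-8*la*mu*(la^2+mu^2) + 4*la*mu*((la+mu)^2*(X la mu * X mu la + X (-la) (-mu) * X (-mu) (-la))
        + (la-mu)^2*(X (-la) mu * X mu (-la) + X la (-mu) * X (-mu) la))
     = ((la-mu)^2*X la (-la)*X (-mu) mu + 4*la*mu*X la mu*X (-mu) (-la)) * ((mu-la)^2*X (-la) la*X mu (-mu) + 4*la*mu*X (-la) (-mu)*X mu la)
       - ((la+mu)^2*X la (-la)*X mu (-mu) - 4*la*mu*X la (-mu)*X mu (-la)) * ((la+mu)^2*X (-la) la*X (-mu) mu - 4*la*mu*X (-la) mu*X (-mu) la)"
    by (rule key[OF I II])
  show ?thesis unfolding L R K ..
qed


lemma mul_diagm: "(X::real^'n::finite^'n) ** diagm d = (\<chi> i j. X$i$j * d j)"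
proof -
  have "(\<Sum>k\<in>UNIV. X$i$k * (if k = j then d k else 0)) = X$i$j * d j" for i j
  proof -
    have "(\<Sum>k\<in>UNIV. X$i$k * (if k = j then d k else 0)) = (\<Sum>k\<in>UNIV. if k = j then X$i$k * d k else 0)"
      by (rule sum.cong) auto
    then show ?thesis by simp
  qed
  then show ?thesis unfolding diagm_def by (simp add: vec_eq_iff matrix_matrix_mult_def)
qed

lemma powi_shift:
  fixes h :: real
  assumes "h \<noteq> 0"
  shows "h powi (m + 1) = h powi m * h" "h powi (m - 1) = h powi m * inverse h"
  using assms by (simp_all add: power_int_add_1 power_int_diff divide_inverse)

theorem theorem1:
  fixes la mu :: real and M Mb c cb :: "real^'n::finite"
  assumes "la \<noteq> 0" and "mu \<noteq> 0" and "la^2 \<noteq> mu^2"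
    and "\<forall>j k. Mb$j \<noteq> M$k"
    and "\<forall>j. la \<noteq> M$j \<and> la \<noteq> - M$j \<and> la \<noteq> Mb$j \<and> la \<noteq> - Mb$j"
    and "\<forall>j. mu \<noteq> M$j \<and> mu \<noteq> - M$j \<and> mu \<noteq> Mb$j \<and> mu \<noteq> - Mb$j"
    and "\<forall>x y n1 n2. det (mat 1 + Amat la mu c M Mb x y n1 n2 ** Abmat la mu cb M Mb x y n1 n2) > 0"
  defines "u \<equiv> uu la mu c cb M Mb"
  shows "\<forall>(x::real) (y::real) (n1::int) (n2::int).
     \<exists>uy :: real \<Rightarrow> real \<Rightarrow> real.
       (\<forall>x' y'. ((\<lambda>t. u x' t n1 n2) has_real_derivative uy x' y') (at y')) \<and>
       ((\<lambda>t. uy t y) has_real_derivative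
          (exp (u x y (n1 + 1) n2 - 2 * u x y n1 n2 + u x y (n1 - 1) n2)
           - exp (u x y n1 (n2 + 1) - 2 * u x y n1 n2 + u x y n1 (n2 - 1)))) (at x)"
proof (intro allI)
  fix x y :: real and n1 n2 :: int
  note la0 = assms(1) and mu0 = assms(2) and lm = assms(3) and hla = assms(5) and hmu = assms(6) and pos = assms(7)
  interpret T: toda M Mb c cb by unfold_locales (use assms(4) in auto)
  define Est where "Est = (\<lambda>x y (n1::int) (n2::int) k. exp (x * Ld M la k + y * Ld M mu k) * Hd M la k powi (n1+n2) * Hd M mu k powi (n2-n1))"
  define Ebst where "Ebst = (\<lambda>x y (n1::int) (n2::int) k. exp (x * Lbd Mb la k + y * Lbd Mb mu k) * Hbd Mb la k powi (n1+n2) * Hbd Mb mu k powi (n2-n1))"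
  have AmatE: "Amat la mu c M Mb x y n1 n2 = T.AA (Est x y n1 n2)" for x y n1 n2
    unfolding Amat_def mul_diagm T.AA_def Est_def A0_def by (simp add: vec_eq_iff mult.assoc)
  have AbmatE: "Abmat la mu cb M Mb x y n1 n2 = T.BB (Ebst x y n1 n2)" for x y n1 n2
    unfolding Abmat_def mul_diagm T.BB_def Ebst_def Ab0_def by (simp add: vec_eq_iff mult.assoc)
  define F where "F = (\<lambda>x y n1 n2. det (T.GG (Est x y n1 n2) (Ebst x y n1 n2)))"
  have Fpos: "F x y n1 n2 > 0" for x y n1 n2
    using pos unfolding F_def T.GG_def AmatE AbmatE by blast
  have inv: "invertible (T.GG (Est x y n1 n2) (Ebst x y n1 n2))" for x y n1 n2
    using Fpos[of x y n1 n2] invertible_det_nz unfolding F_def by force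
  have uF: "u x y n1 n2 = phi la mu x y n1 n2 + ln (F x y n1 n2)" for x y n1 n2
    unfolding u_def uu_def F_def T.GG_def AmatE AbmatE ..
  have nh: "b - a \<noteq> 0 \<and> b + a \<noteq> 0 \<and> d - a \<noteq> 0 \<and> d + a \<noteq> 0"
    if "(a::real) \<noteq> b \<and> a \<noteq> - b \<and> a \<noteq> d \<and> a \<noteq> - d" for a b d
    using that by (smt (verit))
  have zla: "T.zok la" and zmu: "T.zok mu" unfolding T.zok_def using nh hla hmu by blast+
  have nzH: "Hd M la k \<noteq> 0" "Hd M mu k \<noteq> 0" "Hbd Mb la k \<noteq> 0" "Hbd Mb mu k \<noteq> 0" for k
    using zla zmu unfolding T.zok_def Hd_def Hbd_def by auto
  have flowy: "Est x' t n1 n2 = T.Ef mu (Est x' 0 n1 n2) t" "Ebst x' t n1 n2 = T.Ebf mu (Ebst x' 0 n1 n2) t" for x' t n1 n2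
    unfolding Est_def Ebst_def T.Ef_def T.Ebf_def by (simp_all add: fun_eq_iff exp_add mult_ac)
  have flowx: "Est t y' n1 n2 = T.Ef la (Est 0 y' n1 n2) t" "Ebst t y' n1 n2 = T.Ebf la (Ebst 0 y' n1 n2) t" for t y' n1 n2
    unfolding Est_def Ebst_def T.Ef_def T.Ebf_def by (simp_all add: fun_eq_iff exp_add mult_ac)
  have invH: "(M$k - - z) / (M$k + - z) = inverse ((M$k - z) / (M$k + z))" "(Mb$k + - z) / (Mb$k - - z) = inverse ((Mb$k + z) / (Mb$k - z))" for k z
    by (simp_all add: algebra_simps)
  have sh1: "Est x y (n1+1) n2 = T.Esh (-mu) (T.Esh la (Est x y n1 n2))" "Ebst x y (n1+1) n2 = T.Ebsh (-mu) (T.Ebsh la (Ebst x y n1 n2))"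
  proof -
    have e: "n1 + 1 + n2 = (n1 + n2) + 1" "n2 - (n1 + 1) = (n2 - n1) - 1" by simp_all
    show "Est x y (n1+1) n2 = T.Esh (-mu) (T.Esh la (Est x y n1 n2))"
      unfolding Est_def T.Esh_def e fun_eq_iff invH powi_shift[OF nzH(1)] powi_shift[OF nzH(2)] unfolding Hd_def by simp
    show "Ebst x y (n1+1) n2 = T.Ebsh (-mu) (T.Ebsh la (Ebst x y n1 n2))"
      unfolding Ebst_def T.Ebsh_def e fun_eq_iff invH powi_shift[OF nzH(3)] powi_shift[OF nzH(4)] unfolding Hbd_def by simp
  qed
  have sh2: "Est x y (n1-1) n2 = T.Esh mu (T.Esh (-la) (Est x y n1 n2))" "Ebst x y (n1-1) n2 = T.Ebsh mu (T.Ebsh (-la) (Ebst x y n1 n2))"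
  proof -
    have e: "n1 - 1 + n2 = (n1 + n2) - 1" "n2 - (n1 - 1) = (n2 - n1) + 1" by simp_all
    show "Est x y (n1-1) n2 = T.Esh mu (T.Esh (-la) (Est x y n1 n2))"
      unfolding Est_def T.Esh_def e fun_eq_iff invH powi_shift[OF nzH(1)] powi_shift[OF nzH(2)] unfolding Hd_def by simp
    show "Ebst x y (n1-1) n2 = T.Ebsh mu (T.Ebsh (-la) (Ebst x y n1 n2))"
      unfolding Ebst_def T.Ebsh_def e fun_eq_iff invH powi_shift[OF nzH(3)] powi_shift[OF nzH(4)] unfolding Hbd_def by simp
  qed
  have sh3: "Est x y n1 (n2+1) = T.Esh mu (T.Esh la (Est x y n1 n2))" "Ebst x y n1 (n2+1) = T.Ebsh mu (T.Ebsh la (Ebst x y n1 n2))"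
  proof -
    have e: "n1 + (n2 + 1) = (n1 + n2) + 1" "n2 + 1 - n1 = (n2 - n1) + 1" by simp_all
    show "Est x y n1 (n2+1) = T.Esh mu (T.Esh la (Est x y n1 n2))"
      unfolding Est_def T.Esh_def e fun_eq_iff invH powi_shift[OF nzH(1)] powi_shift[OF nzH(2)] unfolding Hd_def by simp
    show "Ebst x y n1 (n2+1) = T.Ebsh mu (T.Ebsh la (Ebst x y n1 n2))"
      unfolding Ebst_def T.Ebsh_def e fun_eq_iff invH powi_shift[OF nzH(3)] powi_shift[OF nzH(4)] unfolding Hbd_def by simp
  qed
  have sh4: "Est x y n1 (n2-1) = T.Esh (-mu) (T.Esh (-la) (Est x y n1 n2))" "Ebst x y n1 (n2-1) = T.Ebsh (-mu) (T.Ebsh (-la) (Ebst x y n1 n2))"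
  proof -
    have e: "n1 + (n2 - 1) = (n1 + n2) - 1" "n2 - 1 - n1 = (n2 - n1) - 1" by simp_all
    show "Est x y n1 (n2-1) = T.Esh (-mu) (T.Esh (-la) (Est x y n1 n2))"
      unfolding Est_def T.Esh_def e fun_eq_iff invH powi_shift[OF nzH(1)] powi_shift[OF nzH(2)] unfolding Hd_def by simp
    show "Ebst x y n1 (n2-1) = T.Ebsh (-mu) (T.Ebsh (-la) (Ebst x y n1 n2))"
      unfolding Ebst_def T.Ebsh_def e fun_eq_iff invH powi_shift[OF nzH(3)] powi_shift[OF nzH(4)] unfolding Hbd_def by simp
  qed
  have lm1: "la - mu \<noteq> 0"
  proof
    assume "la - mu = 0" then have "la = mu" by simp
    then show False using lm by simp
  qed
  have lm2: "la + mu \<noteq> 0"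
  proof
    assume "la + mu = 0" then have "la = - mu" by simp
    then show False using lm by simp
  qed
  have zk: "M$k - la \<noteq> 0" "M$k + la \<noteq> 0" "Mb$k - la \<noteq> 0" "Mb$k + la \<noteq> 0"
      "M$k - mu \<noteq> 0" "M$k + mu \<noteq> 0" "Mb$k - mu \<noteq> 0" "Mb$k + mu \<noteq> 0" for k
    using zla zmu unfolding T.zok_def by auto
  have hs: "M$k + z \<noteq> 0" "M$k - z \<noteq> 0" "Mb$k + z \<noteq> 0" "Mb$k - z \<noteq> 0" if "z \<in> {la,-la,mu,-mu}" for k z
    using that zk[of k] by auto
  have R: "det (T.GG (T.Esh z2 (T.Esh z1 E)) (T.Ebsh z2 (T.Ebsh z1 Eb))) = det (T.GG E Eb) * Tf (T.gg E Eb) z1 z2"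
    if "invertible (T.GG E Eb)" "z1 \<in> {la,-la}" "z2 \<in> {mu,-mu}" for E Eb z1 z2
    unfolding Tf_def
    apply (rule T.ratio2[OF that(1)])
    subgoal by (rule hs(1)) (use that in auto)
    subgoal by (rule hs(1)) (use that in auto)
    subgoal by (rule hs(4)) (use that in auto)
    subgoal by (rule hs(4)) (use that in auto)
    subgoal using that lm1 lm2 by auto
    done
  define E where "E = Est x y n1 n2"
  define Eb where "Eb = Ebst x y n1 n2"
  define g where "g = T.gg E Eb"
  have FT1: "F x y (n1+1) n2 = F x y n1 n2 * Tf g la (-mu)"
    unfolding F_def sh1 g_def E_def Eb_def by (rule R[OF inv]) auto
  have FT2: "F x y (n1-1) n2 = F x y n1 n2 * Tf g (-la) mu"
    unfolding F_def sh2 g_def E_def Eb_def by (rule R[OF inv]) auto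
  have FT3: "F x y n1 (n2+1) = F x y n1 n2 * Tf g la mu"
    unfolding F_def sh3 g_def E_def Eb_def by (rule R[OF inv]) auto
  have FT4: "F x y n1 (n2-1) = F x y n1 n2 * Tf g (-la) (-mu)"
    unfolding F_def sh4 g_def E_def Eb_def by (rule R[OF inv]) auto
  have hyp: "(b - a) * g a b = 1 - T.p1 E Eb a * T.q1 E Eb b - T.p2 E Eb a * T.q2 E Eb b"
    if "a \<in> {la, -la, mu, -mu}" "b \<in> {la, -la, mu, -mu}" for a b
    unfolding g_def E_def Eb_def
    apply (rule T.struct_rel[OF inv])
    subgoal by (rule hs(4)) (use that in auto)
    subgoal by (rule hs(4)) (use that in auto)
    subgoal by (rule hs(2)) (use that in auto)
    done
  have FA: "8 * (la * mu * (la^2 + mu^2) / (la^2 - mu^2)^2) + 2 * mu * DGf g la mu + 2 * mu * DGf g la (-mu)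
    = ((la+mu)/(la-mu))^2 * Tf g la (-mu) * Tf g (-la) mu - (1/((la+mu)/(la-mu))^2) * Tf g la mu * Tf g (-la) (-mu)"
    by (rule final_alg[OF la0 mu0 lm hyp])
  define Lr where "Lr = ln \<bar>(la + mu) / (la - mu)\<bar>"
  have rnz: "(la + mu) / (la - mu) \<noteq> 0" using lm1 lm2 by simp
  have expLr: "exp Lr * exp Lr = ((la+mu)/(la-mu))^2" unfolding Lr_def using rnz by (simp add: power2_eq_square)
  have F0: "F x y n1 n2 > 0" by (rule Fpos)
  have Tpos: "Tf g la (-mu) > 0" "Tf g (-la) mu > 0" "Tf g la mu > 0" "Tf g (-la) (-mu) > 0"
    using Fpos[of x y "n1+1" n2] Fpos[of x y "n1-1" n2] Fpos[of x y n1 "n2+1"] Fpos[of x y n1 "n2-1"] F0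
    unfolding FT1 FT2 FT3 FT4 by (simp_all add: zero_less_mult_iff)
  define K0 where "K0 = 8 * x * y * (la * mu * (la^2 + mu^2) / (la^2 - mu^2)^2)"
  have phiE: "phi la mu x y m1 m2 = K0 + real_of_int (m1^2 - m2^2) * Lr" for m1 m2
    unfolding phi_def K0_def Lr_def ..
  have i1: "((n1+1)^2 - n2^2) - 2*(n1^2 - n2^2) + ((n1-1)^2 - n2^2) = (2::int)"
    by (simp add: power2_eq_square algebra_simps)
  have i2: "(n1^2 - (n2+1)^2) - 2*(n1^2 - n2^2) + (n1^2 - (n2-1)^2) = (-2::int)"
    by (simp add: power2_eq_square algebra_simps)
  have phi1: "phi la mu x y (n1 + 1) n2 - 2 * phi la mu x y n1 n2 + phi la mu x y (n1 - 1) n2 = 2 * Lr"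
  proof -
    have "phi la mu x y (n1 + 1) n2 - 2 * phi la mu x y n1 n2 + phi la mu x y (n1 - 1) n2
       = real_of_int (((n1+1)^2 - n2^2) - 2*(n1^2 - n2^2) + ((n1-1)^2 - n2^2)) * Lr"
      unfolding phiE by (simp add: algebra_simps)
    then show ?thesis unfolding i1 by simp
  qed
  have phi2: "phi la mu x y n1 (n2 + 1) - 2 * phi la mu x y n1 n2 + phi la mu x y n1 (n2 - 1) = - 2 * Lr"
  proof -
    have "phi la mu x y n1 (n2 + 1) - 2 * phi la mu x y n1 n2 + phi la mu x y n1 (n2 - 1)
       = real_of_int ((n1^2 - (n2+1)^2) - 2*(n1^2 - n2^2) + (n1^2 - (n2-1)^2)) * Lr"
      unfolding phiE by (simp add: algebra_simps)
    then show ?thesis unfolding i2 by simp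
  qed
  have lnF: "ln (F x y n1 n2 * Tf g z1 z2) = ln (F x y n1 n2) + ln (Tf g z1 z2)" if "Tf g z1 z2 > 0" for z1 z2
    using F0 that by (simp add: ln_mult)
  have ex1: "exp (u x y (n1 + 1) n2 - 2 * u x y n1 n2 + u x y (n1 - 1) n2) = ((la+mu)/(la-mu))^2 * Tf g la (-mu) * Tf g (-la) mu"
  proof -
    have "u x y (n1 + 1) n2 - 2 * u x y n1 n2 + u x y (n1 - 1) n2 = Lr + Lr + ln (Tf g la (-mu)) + ln (Tf g (-la) mu)"
      unfolding uF FT1 FT2 lnF[OF Tpos(1)] lnF[OF Tpos(2)] using phi1 by (smt (verit))
    then show ?thesis by (simp only: exp_add exp_ln[OF Tpos(1)] exp_ln[OF Tpos(2)] expLr)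
  qed
  have ex2: "exp (u x y n1 (n2 + 1) - 2 * u x y n1 n2 + u x y n1 (n2 - 1)) = (1/((la+mu)/(la-mu))^2) * Tf g la mu * Tf g (-la) (-mu)"
  proof -
    have "u x y n1 (n2 + 1) - 2 * u x y n1 n2 + u x y n1 (n2 - 1) = - (Lr + Lr) + ln (Tf g la mu) + ln (Tf g (-la) (-mu))"
      unfolding uF FT3 FT4 lnF[OF Tpos(3)] lnF[OF Tpos(4)] using phi2 by (smt (verit))
    then show ?thesis by (simp only: exp_add exp_minus exp_ln[OF Tpos(3)] exp_ln[OF Tpos(4)] expLr inverse_eq_divide)
  qed
  define C0 where "C0 = la * mu * (la^2 + mu^2) / (la^2 - mu^2)^2"
  define uy where "uy = (\<lambda>x' y'. 8 * x' * C0 + (2*mu*T.gg (Est x' y' n1 n2) (Ebst x' y' n1 n2) mu mu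
      + 2*mu*T.gg (Est x' y' n1 n2) (Ebst x' y' n1 n2) (-mu) (-mu)))"
  show "\<exists>uy :: real \<Rightarrow> real \<Rightarrow> real.
       (\<forall>x' y'. ((\<lambda>t. u x' t n1 n2) has_real_derivative uy x' y') (at y')) \<and>
       ((\<lambda>t. uy t y) has_real_derivative
          (exp (u x y (n1 + 1) n2 - 2 * u x y n1 n2 + u x y (n1 - 1) n2)
           - exp (u x y n1 (n2 + 1) - 2 * u x y n1 n2 + u x y n1 (n2 - 1)))) (at x)"
  proof (rule exI[of _ uy], intro conjI allI)
    fix x' y' :: real
    define E0 where "E0 = Est x' 0 n1 n2"
    define Eb0 where "Eb0 = Ebst x' 0 n1 n2"
    have fy: "Est x' t n1 n2 = T.Ef mu E0 t" "Ebst x' t n1 n2 = T.Ebf mu Eb0 t" for t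
      unfolding E0_def Eb0_def by (rule flowy)+
    have invy: "invertible (T.GG (T.Ef mu E0 y') (T.Ebf mu Eb0 y'))" using inv[of x' y' n1 n2] unfolding fy .
    have dF: "((\<lambda>t. F x' t n1 n2) has_real_derivative F x' y' n1 n2 *
        (2*mu*T.gg (Est x' y' n1 n2) (Ebst x' y' n1 n2) mu mu + 2*mu*T.gg (Est x' y' n1 n2) (Ebst x' y' n1 n2) (-mu) (-mu))) (at y')"
      unfolding F_def fy by (rule T.flow_det[OF zmu invy])
    have dphi: "((\<lambda>t. phi la mu x' t n1 n2) has_real_derivative 8 * x' * C0) (at y')"
    proof -
      have phiL: "phi la mu x' t n1 n2 = (8 * x' * C0) * t + real_of_int (n1^2 - n2^2) * ln \<bar>(la + mu) / (la - mu)\<bar>" for t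
        unfolding phi_def C0_def by (simp add: mult_ac)
      show ?thesis unfolding phiL by (auto intro!: derivative_eq_intros)
    qed
    have dln: "((\<lambda>t. ln (F x' t n1 n2)) has_real_derivative 1 / F x' y' n1 n2 * (F x' y' n1 n2 *
        (2*mu*T.gg (Est x' y' n1 n2) (Ebst x' y' n1 n2) mu mu + 2*mu*T.gg (Est x' y' n1 n2) (Ebst x' y' n1 n2) (-mu) (-mu)))) (at y')"
      by (rule DERIV_chain2[OF DERIV_ln_divide[OF Fpos] dF])
    have "((\<lambda>t. u x' t n1 n2) has_real_derivative 8 * x' * C0 + 1 / F x' y' n1 n2 * (F x' y' n1 n2 *
        (2*mu*T.gg (Est x' y' n1 n2) (Ebst x' y' n1 n2) mu mu + 2*mu*T.gg (Est x' y' n1 n2) (Ebst x' y' n1 n2) (-mu) (-mu)))) (at y')"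
      unfolding uF by (rule DERIV_add[OF dphi dln])
    moreover have "8 * x' * C0 + 1 / F x' y' n1 n2 * (F x' y' n1 n2 *
        (2*mu*T.gg (Est x' y' n1 n2) (Ebst x' y' n1 n2) mu mu + 2*mu*T.gg (Est x' y' n1 n2) (Ebst x' y' n1 n2) (-mu) (-mu)))
        = uy x' y'"
      using Fpos[of x' y' n1 n2] unfolding uy_def by simp
    ultimately show "((\<lambda>t. u x' t n1 n2) has_real_derivative uy x' y') (at y')" by simp
  next
    define E0 where "E0 = Est 0 y n1 n2"
    define Eb0 where "Eb0 = Ebst 0 y n1 n2"
    have fx: "Est t y n1 n2 = T.Ef la E0 t" "Ebst t y n1 n2 = T.Ebf la Eb0 t" for t
      unfolding E0_def Eb0_def by (rule flowx)+
    have invx: "invertible (T.GG (T.Ef la E0 s) (T.Ebf la Eb0 s))" for s using inv[of s y n1 n2] unfolding fx .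
    have gx: "T.gg (T.Ef la E0 x) (T.Ebf la Eb0 x) = g" unfolding g_def E_def Eb_def fx ..
    have d1: "((\<lambda>s. T.gg (T.Ef la E0 s) (T.Ebf la Eb0 s) mu mu) has_real_derivative DGf g la mu) (at x)"
      unfolding DGf_def gx[symmetric]
      apply (rule T.flow_gg[OF zla invx])
      subgoal by (rule hs(4)) auto
      subgoal using lm1 by simp
      subgoal using lm2 by simp
      subgoal by (rule hs(2)) auto
      subgoal using lm1 by simp
      subgoal using lm2 by simp
      done
    have d2: "((\<lambda>s. T.gg (T.Ef la E0 s) (T.Ebf la Eb0 s) (-mu) (-mu)) has_real_derivative DGf g la (-mu)) (at x)"
      unfolding DGf_def gx[symmetric]
      apply (rule T.flow_gg[OF zla invx])
      subgoal by (rule hs(4)) auto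
      subgoal using lm2 by simp
      subgoal using lm1 by simp
      subgoal by (rule hs(2)) auto
      subgoal using lm2 by simp
      subgoal using lm1 by simp
      done
    have uyx: "uy t y = 8 * t * C0 + (2*mu*T.gg (T.Ef la E0 t) (T.Ebf la Eb0 t) mu mu
      + 2*mu*T.gg (T.Ef la E0 t) (T.Ebf la Eb0 t) (-mu) (-mu))" for t
      unfolding uy_def fx ..
    have dl: "((\<lambda>t. 8 * t * C0) has_real_derivative 8 * C0) (at x)"
      by (auto intro!: derivative_eq_intros)
    have "((\<lambda>t. uy t y) has_real_derivative 8 * C0 + (2*mu*DGf g la mu + 2*mu*DGf g la (-mu))) (at x)"
      unfolding uyx by (rule DERIV_add[OF dl DERIV_add[OF DERIV_cmult[OF d1] DERIV_cmult[OF d2]]])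
    moreover have "8 * C0 + (2*mu*DGf g la mu + 2*mu*DGf g la (-mu))
      = exp (u x y (n1 + 1) n2 - 2 * u x y n1 n2 + u x y (n1 - 1) n2)
           - exp (u x y n1 (n2 + 1) - 2 * u x y n1 n2 + u x y n1 (n2 - 1))"
      unfolding ex1 ex2 FA[symmetric] C0_def by simp
    ultimately show "((\<lambda>t. uy t y) has_real_derivative
          (exp (u x y (n1 + 1) n2 - 2 * u x y n1 n2 + u x y (n1 - 1) n2)
           - exp (u x y n1 (n2 + 1) - 2 * u x y n1 n2 + u x y n1 (n2 - 1)))) (at x)" by simp
  qed
qed


end
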